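(* Suppose Assumption (A) and either Assumption (C1) or Assumption (C2) below hold. Let $x\in \mathbf{X}$, $\beta\in \mathcal{P}^{\mathbf{Y}}(x)$ and $V$ be a bounded solution of the Bellman equation $$\inf_{a\in \mathbf{A}^{g}(x)} \Big\{ -\eta V(x) + \int_{\mathbf{X}} V(\tilde x) \overline{q}(d\tilde x | x,a) -V(x) \overline q (\mathbf{X}|x,a) + C^{g}(x,a) \Big\} \wedge \inf_{a\in \mathbf{A}^{i}(x)} \Big\{ -V(x) + \int_{\mathbf{X}} V(\tilde x) Q(d\tilde x | x,a) +c^{i}(x,a) \Big\} = 0,\quad x\in\mathbf{X}.$$ Then $$-\eta V(x) +\int_{\mathbf{X}} \int_{\mathbf{Y}} \big[V(\overline{x}(y)) +C^{i}(y) \big] \beta(dy | z) \overline{q}(dz| x,a) -V(x) \overline{q}(\mathbf{X}| x,a) +C^{g}(x,a) \geq 0$$ for any $(x,a)\in \mathbb{K}^{g}$.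
   Context: Continuous-time MDP with impulsive and gradual controls. $\mathbf{X}$, $\mathbf{A}=\mathbf{A}^i\cup\mathbf{A}^g$ (disjoint) Borel; $\mathbf{A}^g(x),\mathbf{A}^i(x)$ admissible actions; $\mathbb{K}^g=\{(x,a):a\in\mathbf{A}^g(x)\}$, $\mathbb{X}^i=\{x:\mathbf{A}^i(x)\ne\emptyset\}$, $\mathbb{K}^i=\{(x,a):a\in\mathbf{A}^i(x)\}$; $Q$ stochastic kernel on $\mathbf{X}$ given $\mathbb{K}^i$; $\overline q(\Gamma|x,a)=q(\Gamma\setminus\{x\}|x,a)$ for the transition-rate kernel $q$ on $\mathbb{K}^g$; $C^g$ cost rate, $c^i$ impulse cost, $\eta>0$ discount. $\mathbf{Y}$ is the set of intervention sequences $y=(x_0,a_0,\dots,x_k,a_k,x_{k+1},\Delta,\Delta,\dots)$, $\overline x(y)=x_{k+1}$, $C^i(y)=\sum_k c^i(x_k,a_k)$. Randomized interventions are strategic measures $\beta^b(\cdot|\cdot)$ of policies $b$ (in the discrete-time impulse MDP driven by $Q$, with stopping action $\Delta$) satisfying $\beta^b(\mathbf{Y}|x)=1$; $\mathcal{P}^{\mathbf{Y}}$ denotes the set of such kernels and $\mathcal{P}^{\mathbf{Y}}(x)$ their sections at $x$ (here $\beta$ is used as a kernel $\beta(dy|z)$). Assumption (A): there is $K$ with $\overline q(\mathbf{X}|x,a^g)\le K$, $|C^g(x,a^g)|\le K$, $c^i(x,a^i)\ge0$ for all admissible $a^g,a^i$. Assumption (C1): $\mathbb{K}^g$, $\mathbb{K}^i$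 open in $\mathbf{X}\times\mathbf{A}^g$, $\mathbb{X}^i\times\mathbf{A}^i$; for continuous bounded $F$, $\int F(z)\overline q(dz|x,a)$ and $\int F(z)Q(dz|x,a)$ continuous on $\mathbb{K}^g$, $\mathbb{K}^i$; $C^g$, $c^i$ upper semicontinuous. Assumption (C2): $\mathbf{A}^g$, $\mathbf{A}^i$ compact; $\mathbb{K}^g$, $\mathbb{K}^i$ closed in $\mathbf{X}\times\mathbf{A}^g$, $\mathbb{X}^i\times\mathbf{A}^i$; same continuity of the integrals; $C^g$, $c^i$ lower semicontinuous. *)

theory Defs
  imports "HOL-Probability.Probability"
begin

definition usc_on :: "'b::topological_space set \<Rightarrow> ('b \<Rightarrow> real) \<Rightarrow> bool" where
  "usc_on S f \<longleftrightarrow> (\<forall>t. openin (top_of_set S) {p \<in> S. f p < t})"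

definition lsc_on :: "'b::topological_space set \<Rightarrow> ('b \<Rightarrow> real) \<Rightarrow> bool" where
  "lsc_on S f \<longleftrightarrow> (\<forall>t. openin (top_of_set S) {p \<in> S. t < f p})"

text \<open>Integral of an extended-real valued function: positive part minus negative part
  (the usual Lebesgue integral; it may take the value +infinity when the negative part is finite).\<close>

definition ext_integral :: "'b measure \<Rightarrow> ('b \<Rightarrow> ereal) \<Rightarrow> ereal" where
  "ext_integral M f =
     enn2ereal (\<integral>\<^sup>+ z. e2ennreal (f z) \<partial>M) - enn2ereal (\<integral>\<^sup>+ z. e2ennreal (- f z) \<partial>M)"

definition XM :: "'x::topological_space set \<Rightarrow> 'x measure" where
  "XM Xs = restrict_space borel Xs"

definition Kset :: "'x set \<Rightarrow> ('x \<Rightarrow> 'a set) \<Rightarrow> ('x \<times> 'a) set" where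
  "Kset Xs Ax = {(x, a). x \<in> Xs \<and> a \<in> Ax x}"

definition Xi_set :: "'x set \<Rightarrow> ('x \<Rightarrow> 'a set) \<Rightarrow> 'x set" where
  "Xi_set Xs Aix = {x \<in> Xs. Aix x \<noteq> {}}"

text \<open>Adjoin the cemetery / stopping point Delta, represented by None.\<close>

definition optM :: "'b measure \<Rightarrow> 'b option measure" where
  "optM M = sigma (insert None (Some ` space M)) (insert {None} ((`) Some ` sets M))"

text \<open>Trajectories (x_0,a_0,x_1,a_1,...) of the impulse MDP, with states in X + {Delta}
  and actions in A^i + {Delta}.\<close>

type_synonym ('x, 'a) traj = "nat \<Rightarrow> 'x option \<times> 'a option"

definition trajM :: "'x::topological_space set \<Rightarrow> 'a::topological_space set \<Rightarrow> ('x, 'a) traj measure" where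
  "trajM Xs Ai = PiM UNIV (\<lambda>_. optM (XM Xs) \<Otimes>\<^sub>M optM (restrict_space borel Ai))"

text \<open>Two trajectories share the history h_n = (x_0,a_0,...,x_n).\<close>

definition hist_eq :: "nat \<Rightarrow> ('x, 'a) traj \<Rightarrow> ('x, 'a) traj \<Rightarrow> bool" where
  "hist_eq n \<omega> \<omega>' \<longleftrightarrow> (\<forall>j<n. \<omega> j = \<omega>' j) \<and> fst (\<omega> n) = fst (\<omega>' n)"

definition is_policy ::
  "'x::topological_space set \<Rightarrow> 'a::topological_space set \<Rightarrow> ('x \<Rightarrow> 'a set)
   \<Rightarrow> (nat \<Rightarrow> ('x, 'a) traj \<Rightarrow> 'a option measure) \<Rightarrow> bool" where
  "is_policy Xs Ai Aix b \<longleftrightarrow>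
     (\<forall>n. b n \<in> trajM Xs Ai \<rightarrow>\<^sub>M prob_algebra (optM (restrict_space borel Ai))) \<and>
     (\<forall>n \<omega> \<omega>'. hist_eq n \<omega> \<omega>' \<longrightarrow> b n \<omega> = b n \<omega>') \<and>
     (\<forall>n. \<forall>\<omega>\<in>space (trajM Xs Ai).
        (\<forall>x. fst (\<omega> n) = Some x \<longrightarrow> (AE a in b n \<omega>. a = None \<or> (\<exists>a'. a = Some a' \<and> a' \<in> Aix x))) \<and>
        (fst (\<omega> n) = None \<longrightarrow> (AE a in b n \<omega>. a = None)))"

definition imp_trans ::
  "'x::topological_space set \<Rightarrow> ('x \<times> 'a) set \<Rightarrow> ('x \<Rightarrow> 'a \<Rightarrow> 'x measure)
   \<Rightarrow> 'x option \<times> 'a option \<Rightarrow> 'x option measure" where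
  "imp_trans Xs Ki Q s =
     (case s of
        (Some x, Some a) \<Rightarrow>
          if (x, a) \<in> Ki then distr (Q x a) (optM (XM Xs)) Some else return (optM (XM Xs)) None
      | _ \<Rightarrow> return (optM (XM Xs)) None)"

text \<open>P is the strategic measure of policy b from the initial state z (characterised by the
  initial distribution and the two conditional-distribution identities of Ionescu-Tulcea).\<close>

definition is_strategic ::
  "'x::topological_space set \<Rightarrow> 'a::topological_space set \<Rightarrow> ('x \<times> 'a) set
   \<Rightarrow> ('x \<Rightarrow> 'a \<Rightarrow> 'x measure) \<Rightarrow> (nat \<Rightarrow> ('x, 'a) traj \<Rightarrow> 'a option measure)
   \<Rightarrow> 'x \<Rightarrow> ('x, 'a) traj measure \<Rightarrow> bool" where
  "is_strategic Xs Ai Ki Q b z P \<longleftrightarrow>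
     sets P = sets (trajM Xs Ai) \<and> prob_space P \<and>
     (AE \<omega> in P. fst (\<omega> 0) = Some z) \<and>
     (\<forall>n g B. g \<in> borel_measurable (trajM Xs Ai) \<longrightarrow> bounded (range g) \<longrightarrow>
        (\<forall>\<omega> \<omega>'. hist_eq n \<omega> \<omega>' \<longrightarrow> g \<omega> = g \<omega>') \<longrightarrow>
        B \<in> sets (optM (restrict_space borel Ai)) \<longrightarrow>
        (\<integral>\<omega>. g \<omega> * indicator B (snd (\<omega> n)) \<partial>P) = (\<integral>\<omega>. g \<omega> * measure (b n \<omega>) B \<partial>P)) \<and>
     (\<forall>n g B. g \<in> borel_measurable (trajM Xs Ai) \<longrightarrow> bounded (range g) \<longrightarrow>
        (\<forall>\<omega> \<omega>'. (\<forall>j\<le>n. \<omega> j = \<omega>' j) \<longrightarrow> g \<omega> = g \<omega>') \<longrightarrow>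
        B \<in> sets (optM (XM Xs)) \<longrightarrow>
        (\<integral>\<omega>. g \<omega> * indicator B (fst (\<omega> (Suc n))) \<partial>P)
          = (\<integral>\<omega>. g \<omega> * measure (imp_trans Xs Ki Q (\<omega> n)) B \<partial>P))"

text \<open>The set Y of intervention sequences (x_0,a_0,...,x_k,a_k,x_(k+1),Delta,Delta,...);
  here k is the number of impulses (k = 0 allowed: (x_0,Delta,...)).\<close>

definition Yset :: "'x set \<Rightarrow> 'a set \<Rightarrow> ('x, 'a) traj set" where
  "Yset Xs Ai = {\<omega>. \<exists>k.
      (\<forall>j<k. \<exists>x a. \<omega> j = (Some x, Some a) \<and> x \<in> Xs \<and> a \<in> Ai) \<and>
      (\<exists>x\<in>Xs. \<omega> k = (Some x, None)) \<and>
      (\<forall>j>k. \<omega> j = (None, None))}"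

definition ystop :: "('x, 'a) traj \<Rightarrow> nat" where
  "ystop \<omega> = (LEAST k. snd (\<omega> k) = None)"

definition xbar :: "('x, 'a) traj \<Rightarrow> 'x" where
  "xbar \<omega> = the (fst (\<omega> (ystop \<omega>)))"

definition Ci :: "('x \<Rightarrow> 'a \<Rightarrow> real) \<Rightarrow> ('x, 'a) traj \<Rightarrow> real" where
  "Ci ci \<omega> = (\<Sum>j<ystop \<omega>. ci (the (fst (\<omega> j))) (the (snd (\<omega> j))))"

definition rand_intervention ::
  "'x::topological_space set \<Rightarrow> 'a::topological_space set \<Rightarrow> ('x \<Rightarrow> 'a set)
   \<Rightarrow> ('x \<Rightarrow> 'a \<Rightarrow> 'x measure) \<Rightarrow> ('x \<Rightarrow> ('x, 'a) traj measure) \<Rightarrow> bool" where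
  "rand_intervention Xs Ai Aix Q \<beta> \<longleftrightarrow>
     (\<exists>b. is_policy Xs Ai Aix b \<and>
          (\<forall>z\<in>Xs. is_strategic Xs Ai (Kset Xs Aix) Q b z (\<beta> z) \<and>
                   emeasure (\<beta> z) (Yset Xs Ai) = 1))"

definition kernel_on :: "'x::topological_space set \<Rightarrow> ('x \<times> 'a::topological_space) set
   \<Rightarrow> ('x \<Rightarrow> 'a \<Rightarrow> 'x measure) \<Rightarrow> bool" where
  "kernel_on Xs K k \<longleftrightarrow>
     (\<forall>(x, a)\<in>K. sets (k x a) = sets (XM Xs) \<and> finite_measure (k x a)) \<and>
     (\<forall>\<Gamma>\<in>sets (XM Xs). (\<lambda>p. emeasure (k (fst p) (snd p)) \<Gamma>) \<in> borel_measurable (restrict_space borel K))"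

definition AssumptionA where
  "AssumptionA Xs Agx Aix qbar Cg ci \<longleftrightarrow>
     (\<exists>K::real. (\<forall>(x, a)\<in>Kset Xs Agx. measure (qbar x a) Xs \<le> K \<and> \<bar>Cg x a\<bar> \<le> K) \<and>
       (\<forall>(x, a)\<in>Kset Xs Aix. 0 \<le> ci x a))"

definition AssumptionC1 where
  "AssumptionC1 Xs Ag Ai Agx Aix qbar Q Cg ci \<longleftrightarrow>
     openin (top_of_set (Xs \<times> Ag)) (Kset Xs Agx) \<and>
     openin (top_of_set (Xi_set Xs Aix \<times> Ai)) (Kset Xs Aix) \<and>
     (\<forall>F::_ \<Rightarrow> real. continuous_on Xs F \<longrightarrow> bounded (F ` Xs) \<longrightarrow>
        continuous_on (Kset Xs Agx) (\<lambda>(x, a). \<integral>z. F z \<partial>qbar x a) \<and>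
        continuous_on (Kset Xs Aix) (\<lambda>(x, a). \<integral>z. F z \<partial>Q x a)) \<and>
     usc_on (Kset Xs Agx) (\<lambda>(x, a). Cg x a) \<and> usc_on (Kset Xs Aix) (\<lambda>(x, a). ci x a)"

definition AssumptionC2 where
  "AssumptionC2 Xs Ag Ai Agx Aix qbar Q Cg ci \<longleftrightarrow>
     compact Ag \<and> compact Ai \<and>
     closedin (top_of_set (Xs \<times> Ag)) (Kset Xs Agx) \<and>
     closedin (top_of_set (Xi_set Xs Aix \<times> Ai)) (Kset Xs Aix) \<and>
     (\<forall>F::_ \<Rightarrow> real. continuous_on Xs F \<longrightarrow> bounded (F ` Xs) \<longrightarrow>
        continuous_on (Kset Xs Agx) (\<lambda>(x, a). \<integral>z. F z \<partial>qbar x a) \<and>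
        continuous_on (Kset Xs Aix) (\<lambda>(x, a). \<integral>z. F z \<partial>Q x a)) \<and>
     lsc_on (Kset Xs Agx) (\<lambda>(x, a). Cg x a) \<and> lsc_on (Kset Xs Aix) (\<lambda>(x, a). ci x a)"

end

theory Submission
  imports Defs
begin


definition oc2 :: "('x \<times> 'a \<Rightarrow> 'b) \<Rightarrow> 'b \<Rightarrow> 'x option \<times> 'a option \<Rightarrow> 'b" where
  "oc2 F c p = (if fst p \<noteq> None \<and> snd p \<noteq> None then F (the (fst p), the (snd p)) else c)"

lemma oc2_simps[simp]:
  "oc2 F c (Some x, Some a) = F (x, a)"
  "oc2 F c (None, o2) = c"
  "oc2 F c (o1, None) = c"
  by (auto simp: oc2_def)

lemma optM_gen: "insert {None} ((`) Some ` sets M) \<subseteq> Pow (insert None (Some ` space M))"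
  using sets.sets_into_space by auto

lemma space_optM: "space (optM M) = insert None (Some ` space M)"
  unfolding optM_def by (rule space_measure_of[OF optM_gen])

lemma sets_optM: "sets (optM M) = sigma_sets (insert None (Some ` space M)) (insert {None} ((`) Some ` sets M))"
  unfolding optM_def by (rule sets_measure_of[OF optM_gen])

lemma None_sets_optM: "{None} \<in> sets (optM M)"
  unfolding sets_optM by (rule sigma_sets.Basic) simp

lemma Some_sets_optM: "A \<in> sets M \<Longrightarrow> Some ` A \<in> sets (optM M)"
  unfolding sets_optM by (rule sigma_sets.Basic) simp

lemma measurable_case_option_optM:
  assumes f: "f \<in> M \<rightarrow>\<^sub>M N" and c: "c \<in> space N"
  shows "(\<lambda>u. case u of None \<Rightarrow> c | Some x \<Rightarrow> f x) \<in> optM M \<rightarrow>\<^sub>M N"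
proof (rule measurableI)
  fix u assume "u \<in> space (optM M)"
  then show "(case u of None \<Rightarrow> c | Some x \<Rightarrow> f x) \<in> space N"
    using c measurable_space[OF f] by (auto simp: space_optM)
next
  fix A assume A: "A \<in> sets N"
  have eq: "(\<lambda>u. case u of None \<Rightarrow> c | Some x \<Rightarrow> f x) -` A \<inter> space (optM M)
      = (if c \<in> A then {None} else {}) \<union> Some ` (f -` A \<inter> space M)"
    by (auto simp: space_optM split: option.splits)
  have "f -` A \<inter> space M \<in> sets M" using f A by (rule measurable_sets)
  then have S: "Some ` (f -` A \<inter> space M) \<in> sets (optM M)" by (rule Some_sets_optM)
  show "(\<lambda>u. case u of None \<Rightarrow> c | Some x \<Rightarrow> f x) -` A \<inter> space (optM M) \<in> sets (optM M)"
    unfolding eq using sets.Un[OF None_sets_optM S] S by (simp del: Un_insert_left)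
qed

lemma Some_measurable_optM: "Some \<in> M \<rightarrow>\<^sub>M optM M"
proof (rule measurableI)
  fix x assume "x \<in> space M" then show "Some x \<in> space (optM M)" by (simp add: space_optM)
next
  fix A assume "A \<in> sets (optM M)"
  then show "Some -` A \<inter> space M \<in> sets M"
    unfolding sets_optM
  proof induction
    case (Basic a)
    then consider "a = {None}" | B where "B \<in> sets M" "a = Some ` B" by blast
    then show ?case
    proof cases
      case 1 then have "Some -` a \<inter> space M = {}" by auto
      then show ?thesis by simp
    next
      case 2 then have "Some -` a \<inter> space M = B" using sets.sets_into_space[OF 2(1)] by auto
      then show ?thesis using 2 by simp
    qed
  next
    case Empty then show ?case by simp
  next
    case (Compl a)
    have "Some -` (insert None (Some ` space M) - a) \<inter> space M = space M - (Some -` a \<inter> space M)" by auto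
    then show ?case using Compl by auto
  next
    case (Union a)
    have "Some -` (\<Union>i. a i) \<inter> space M = (\<Union>i. Some -` a i \<inter> space M)" by auto
    moreover have "(\<Union>i. Some -` a i \<inter> space M) \<in> sets M" using Union by (intro sets.countable_UN) auto
    ultimately show ?case by (simp only:)
  qed
qed

lemma the_measurable_optM: "the \<in> optM (restrict_space borel S) \<rightarrow>\<^sub>M borel"
proof -
  have "(\<lambda>u. case u of None \<Rightarrow> the None | Some x \<Rightarrow> id x) \<in> optM (restrict_space borel S) \<rightarrow>\<^sub>M borel"
    by (rule measurable_case_option_optM) (auto intro: measurable_restrict_space1)
  moreover have "(\<lambda>u. case u of None \<Rightarrow> the None | Some x \<Rightarrow> id x) = the"
    by (auto simp: fun_eq_iff split: option.splits)
  ultimately show ?thesis by metis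
qed

lemma oc2_measurable:
  fixes Xs :: "'x::second_countable_topology set" and Ai :: "'a::second_countable_topology set"
  assumes F: "F \<in> (borel :: ('x \<times> 'a) measure) \<rightarrow>\<^sub>M N" and c: "c \<in> space N"
  shows "oc2 F c \<in> optM (restrict_space borel Xs) \<Otimes>\<^sub>M optM (restrict_space borel Ai) \<rightarrow>\<^sub>M N"
  unfolding oc2_def
proof (rule measurable_If)
  have F': "F \<in> borel \<Otimes>\<^sub>M borel \<rightarrow>\<^sub>M N" using F by (simp add: borel_prod)
  show "(\<lambda>p. F (the (fst p), the (snd p))) \<in> optM (restrict_space borel Xs) \<Otimes>\<^sub>M optM (restrict_space borel Ai) \<rightarrow>\<^sub>M N"
    by (rule measurable_compose[OF _ F'], rule measurable_Pair)
       (rule measurable_compose[OF measurable_fst the_measurable_optM],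
        rule measurable_compose[OF measurable_snd the_measurable_optM])
  show "(\<lambda>p. c) \<in> optM (restrict_space borel Xs) \<Otimes>\<^sub>M optM (restrict_space borel Ai) \<rightarrow>\<^sub>M N"
    using c by simp
  have eq: "{p \<in> space (optM (restrict_space borel Xs) \<Otimes>\<^sub>M optM (restrict_space borel Ai)).
       fst p \<noteq> None \<and> snd p \<noteq> None}
     = (space (optM (restrict_space borel Xs)) - {None}) \<times> (space (optM (restrict_space borel Ai)) - {None})"
    by (auto simp: space_pair_measure)
  show "{p \<in> space (optM (restrict_space borel Xs) \<Otimes>\<^sub>M optM (restrict_space borel Ai)).
       fst p \<noteq> None \<and> snd p \<noteq> None} \<in> sets (optM (restrict_space borel Xs) \<Otimes>\<^sub>M optM (restrict_space borel Ai))"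
    unfolding eq by (intro pair_measureI sets.Diff sets.top None_sets_optM)
qed

lemma traj_component_measurable:
  "(\<lambda>\<omega>. \<omega> n) \<in> trajM Xs Ai \<rightarrow>\<^sub>M optM (XM Xs) \<Otimes>\<^sub>M optM (restrict_space borel Ai)"
  unfolding trajM_def by (rule measurable_component_singleton) simp


context
  fixes Xs :: "'x::polish_space set" and Ai :: "'a::polish_space set" and Aix :: "'x \<Rightarrow> 'a set"
    and Q :: "'x \<Rightarrow> 'a \<Rightarrow> 'x measure" and b and z and P
  assumes pol: "is_policy Xs Ai Aix b"
    and str: "is_strategic Xs Ai (Kset Xs Aix) Q b z P"
    and Ki_meas: "Kset Xs Aix \<in> sets borel"
begin

lemma P_sets: "sets P = sets (trajM Xs Ai)"
  using str by (simp add: is_strategic_def)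

lemma P_prob: "prob_space P"
  using str by (simp add: is_strategic_def)

lemma P_space: "space P = space (trajM Xs Ai)"
  using P_sets by (rule sets_eq_imp_space_eq)

lemma comp_meas: "(\<lambda>\<omega>. \<omega> n) \<in> P \<rightarrow>\<^sub>M optM (XM Xs) \<Otimes>\<^sub>M optM (restrict_space borel Ai)"
  using traj_component_measurable measurable_cong_sets[OF P_sets refl] by blast

lemma space_S: "space (optM (XM Xs) \<Otimes>\<^sub>M optM (restrict_space borel Ai))
   = insert None (Some ` Xs) \<times> insert None (Some ` Ai)"
  by (simp add: space_pair_measure space_optM XM_def space_restrict_space)

lemma bn_meas: "b n \<in> P \<rightarrow>\<^sub>M subprob_algebra (optM (restrict_space borel Ai))"
  using pol measurable_cong_sets[OF P_sets refl]
  by (auto simp: is_policy_def intro: measurable_prob_algebraD)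

lemma action_ok: "AE \<omega> in P. \<forall>x a. \<omega> n = (Some x, Some a) \<longrightarrow> (x, a) \<in> Kset Xs Aix"
proof -
  define OX where "OX = optM (XM Xs)"
  define OA where "OA = optM (restrict_space borel Ai)"
  define S where "S = OX \<Otimes>\<^sub>M OA"
  have comp: "(\<lambda>\<omega>. \<omega> n) \<in> P \<rightarrow>\<^sub>M S" unfolding S_def OX_def OA_def by (rule comp_meas)
  have bn: "b n \<in> P \<rightarrow>\<^sub>M subprob_algebra OA" unfolding OA_def by (rule bn_meas)
  have bnsp: "b n \<omega> \<in> space (prob_algebra OA)" if "\<omega> \<in> space P" for \<omega>
  proof -
    have "b n \<in> trajM Xs Ai \<rightarrow>\<^sub>M prob_algebra OA" using pol unfolding is_policy_def OA_def by blast
    then show ?thesis using that P_space by (metis measurable_space)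
  qed
  have bnsets: "sets (b n \<omega>) = sets OA" if "\<omega> \<in> space P" for \<omega>
    using bnsp[OF that] by (simp add: space_prob_algebra)
  have bnprob: "prob_space (b n \<omega>)" if "\<omega> \<in> space P" for \<omega>
    using bnsp[OF that] by (simp add: space_prob_algebra)
  define K where "K \<omega> = distr (b n \<omega>) S (\<lambda>a. (fst (\<omega> n), a))" for \<omega>
  have pairm: "(\<lambda>(\<omega>, a). (fst (\<omega> n), a)) \<in> P \<Otimes>\<^sub>M OA \<rightarrow>\<^sub>M S"
  proof -
    have "(\<lambda>p. (fst (fst p n), snd p)) \<in> P \<Otimes>\<^sub>M OA \<rightarrow>\<^sub>M OX \<Otimes>\<^sub>M OA"
    proof (rule measurable_Pair)
      have "(\<lambda>\<omega>. fst (\<omega> n)) \<in> P \<rightarrow>\<^sub>M OX" using measurable_compose[OF comp[unfolded S_def] measurable_fst] by simp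
      then show "(\<lambda>p. fst (fst p n)) \<in> P \<Otimes>\<^sub>M OA \<rightarrow>\<^sub>M OX" by (rule measurable_fst'')
      show "snd \<in> P \<Otimes>\<^sub>M OA \<rightarrow>\<^sub>M OA" by (rule measurable_snd)
    qed
    then show ?thesis unfolding S_def by (simp add: case_prod_beta')
  qed
  have Kmeas: "K \<in> P \<rightarrow>\<^sub>M subprob_algebra S"
    unfolding K_def by (rule measurable_distr2[OF pairm bn])
  have Km: "(\<lambda>a. (fst (\<omega> n), a)) \<in> b n \<omega> \<rightarrow>\<^sub>M S" if "\<omega> \<in> space P" for \<omega>
  proof -
    have "fst (\<omega> n) \<in> space OX" using measurable_space[OF comp that] by (auto simp: S_def space_pair_measure)
    then have "(\<lambda>a. (fst (\<omega> n), a)) \<in> OA \<rightarrow>\<^sub>M S" unfolding S_def by (intro measurable_Pair) auto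
    then show ?thesis using measurable_cong_sets[OF bnsets[OF that] refl] by blast
  qed
  have spP: "space P \<noteq> {}" using prob_space.not_empty[OF P_prob] .
  define \<mu> where "\<mu> = distr P S (\<lambda>\<omega>. \<omega> n)"
  define \<nu> where "\<nu> = bind P K"
  have sets\<nu>: "sets \<nu> = sets S" unfolding \<nu>_def by (rule sets_bind_measurable[OF Kmeas spP])
  have rect: "emeasure \<mu> (C \<times> D) = emeasure \<nu> (C \<times> D)" if C: "C \<in> sets OX" and D: "D \<in> sets OA" for C D
  proof -
    have CD: "C \<times> D \<in> sets S" unfolding S_def using C D by (rule pair_measureI)
    define g :: "(nat \<Rightarrow> 'x option \<times> 'a option) \<Rightarrow> real" where "g \<omega> = indicator C (fst (\<omega> n))" for \<omega>
    have gm: "g \<in> borel_measurable P"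
      unfolding g_def using measurable_compose[OF measurable_compose[OF comp[unfolded S_def] measurable_fst] borel_measurable_indicator[OF C]] by simp
    have gT: "g \<in> borel_measurable (trajM Xs Ai)" using gm measurable_cong_sets[OF P_sets refl] by blast
    have m1: "(\<lambda>\<omega>. indicator D (snd (\<omega> n)) :: real) \<in> borel_measurable P"
      using measurable_compose[OF measurable_compose[OF comp[unfolded S_def] measurable_snd] borel_measurable_indicator[OF D]] by simp
    have m2: "(\<lambda>\<omega>. measure (b n \<omega>) D) \<in> borel_measurable P"
      using measurable_compose[OF bn measurable_measure_subprob_algebra[OF D]] .
    interpret P: prob_space P by (rule P_prob)
    have i1: "integrable P (\<lambda>\<omega>. g \<omega> * indicator D (snd (\<omega> n)))"
    proof (rule P.integrable_const_bound[where B=1])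
      show "AE x in P. norm (g x * indicator D (snd (x n))) \<le> 1"
        by (auto simp: g_def indicator_def intro!: AE_I2)
    qed (intro borel_measurable_times gm m1)
    have i2: "integrable P (\<lambda>\<omega>. g \<omega> * measure (b n \<omega>) D)"
    proof (rule P.integrable_const_bound[where B=1])
      show "AE x in P. norm (g x * measure (b n x) D) \<le> 1"
        using prob_space.prob_le_1[OF bnprob] by (auto simp: g_def indicator_def intro!: AE_I2)
    qed (intro borel_measurable_times gm m2)
    have eqint: "(\<integral>\<omega>. g \<omega> * indicator D (snd (\<omega> n)) \<partial>P) = (\<integral>\<omega>. g \<omega> * measure (b n \<omega>) D \<partial>P)"
    proof -
      have "bounded (range g)" by (auto simp: g_def bounded_iff indicator_def intro!: exI[of _ 1])
      moreover have "\<forall>\<omega> \<omega>'. hist_eq n \<omega> \<omega>' \<longrightarrow> g \<omega> = g \<omega>'" by (auto simp: g_def hist_eq_def)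
      ultimately show ?thesis using str gT D by (auto simp: is_strategic_def OA_def)
    qed
    have "emeasure \<mu> (C \<times> D) = emeasure P ((\<lambda>\<omega>. \<omega> n) -` (C \<times> D) \<inter> space P)"
      unfolding \<mu>_def by (rule emeasure_distr[OF comp CD])
    also have "\<dots> = (\<integral>\<^sup>+\<omega>. indicator ((\<lambda>\<omega>. \<omega> n) -` (C \<times> D) \<inter> space P) \<omega> \<partial>P)"
      using measurable_sets[OF comp CD] by simp
    also have "\<dots> = (\<integral>\<^sup>+\<omega>. ennreal (g \<omega> * indicator D (snd (\<omega> n))) \<partial>P)"
      by (intro nn_integral_cong) (auto simp: g_def indicator_def mem_Times_iff)
    also have "\<dots> = ennreal (\<integral>\<omega>. g \<omega> * indicator D (snd (\<omega> n)) \<partial>P)"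
      by (rule nn_integral_eq_integral[OF i1]) (auto simp: g_def)
    also have "\<dots> = ennreal (\<integral>\<omega>. g \<omega> * measure (b n \<omega>) D \<partial>P)" by (simp add: eqint)
    also have "\<dots> = (\<integral>\<^sup>+\<omega>. ennreal (g \<omega> * measure (b n \<omega>) D) \<partial>P)"
      by (rule nn_integral_eq_integral[OF i2, symmetric]) (auto simp: g_def)
    also have "\<dots> = (\<integral>\<^sup>+\<omega>. emeasure (K \<omega>) (C \<times> D) \<partial>P)"
    proof (intro nn_integral_cong)
      fix \<omega> assume w: "\<omega> \<in> space P"
      have "emeasure (K \<omega>) (C \<times> D) = emeasure (b n \<omega>) ((\<lambda>a. (fst (\<omega> n), a)) -` (C \<times> D) \<inter> space (b n \<omega>))"
        unfolding K_def by (rule emeasure_distr[OF Km[OF w] CD])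
      also have "(\<lambda>a. (fst (\<omega> n), a)) -` (C \<times> D) \<inter> space (b n \<omega>) = (if fst (\<omega> n) \<in> C then D else {})"
        using sets.sets_into_space[OF D] sets_eq_imp_space_eq[OF bnsets[OF w]] by auto
      finally have KD: "emeasure (K \<omega>) (C \<times> D) = emeasure (b n \<omega>) (if fst (\<omega> n) \<in> C then D else {})" .
      then show "ennreal (g \<omega> * measure (b n \<omega>) D) = emeasure (K \<omega>) (C \<times> D)"
      proof -
        interpret B: prob_space "b n \<omega>" by (rule bnprob[OF w])
        show ?thesis
        proof (cases "fst (\<omega> n) \<in> C")
          case True then show ?thesis using KD by (simp add: g_def B.emeasure_eq_measure)
        next
          case False then show ?thesis using KD by (simp add: g_def)
        qed
      qed
    qed
    also have "\<dots> = emeasure \<nu> (C \<times> D)"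
      unfolding \<nu>_def by (rule emeasure_bind[OF spP Kmeas CD, symmetric])
    finally show ?thesis .
  qed
  have \<mu>\<nu>: "\<mu> = \<nu>"
  proof (rule measure_eqI_generator_eq[where E="{a \<times> b |a b. a \<in> sets OX \<and> b \<in> sets OA}"
        and \<Omega>="space OX \<times> space OA" and A="\<lambda>_. space OX \<times> space OA"])
    show "Int_stable {a \<times> b |a b. a \<in> sets OX \<and> b \<in> sets OA}" by (rule Int_stable_pair_measure_generator)
    show "{a \<times> b |a b. a \<in> sets OX \<and> b \<in> sets OA} \<subseteq> Pow (space OX \<times> space OA)"
    proof (intro subsetI)
      fix X assume "X \<in> {a \<times> b |a b. a \<in> sets OX \<and> b \<in> sets OA}"
      then obtain a b where "X = a \<times> b" "a \<in> sets OX" "b \<in> sets OA" by blast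
      then show "X \<in> Pow (space OX \<times> space OA)"
        using sets.sets_into_space[of a OX] sets.sets_into_space[of b OA] by auto
    qed
    show "emeasure \<mu> X = emeasure \<nu> X" if "X \<in> {a \<times> b |a b. a \<in> sets OX \<and> b \<in> sets OA}" for X
    proof -
      from that obtain a b where "X = a \<times> b" "a \<in> sets OX" "b \<in> sets OA" by blast
      then show ?thesis using rect by simp
    qed
    show "sets \<mu> = sigma_sets (space OX \<times> space OA) {a \<times> b |a b. a \<in> sets OX \<and> b \<in> sets OA}"
      unfolding \<mu>_def S_def by (simp add: sets_pair_measure)
    show "sets \<nu> = sigma_sets (space OX \<times> space OA) {a \<times> b |a b. a \<in> sets OX \<and> b \<in> sets OA}"
      unfolding sets\<nu> S_def by (simp add: sets_pair_measure)
    have "space OX \<times> space OA \<in> {a \<times> b |a b. a \<in> sets OX \<and> b \<in> sets OA}"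
      using sets.top[of OX] sets.top[of OA] by blast
    then show "range (\<lambda>_. space OX \<times> space OA) \<subseteq> {a \<times> b |a b. a \<in> sets OX \<and> b \<in> sets OA}" by auto
    show "(\<Union>i. space OX \<times> space OA) = space OX \<times> space OA" by simp
    show "emeasure \<mu> (space OX \<times> space OA) \<noteq> \<infinity>" for i :: nat
    proof -
      interpret M: prob_space \<mu> unfolding \<mu>_def by (rule prob_space.prob_space_distr[OF P_prob comp])
      show ?thesis unfolding infinity_ennreal_def by (rule M.emeasure_finite)
    qed
  qed
  define Bd where "Bd = {p \<in> space S. oc2 (\<lambda>q. q \<notin> Kset Xs Aix) False p}"
  have Bd: "Bd \<in> sets S"
  proof -
    have F: "(\<lambda>q. q \<notin> Kset Xs Aix) \<in> borel \<rightarrow>\<^sub>M count_space UNIV"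
    proof -
      have "Measurable.pred borel (\<lambda>q. q \<in> Kset Xs Aix)" unfolding pred_def using Ki_meas by simp
      then show ?thesis by (rule pred_intros_logic(2))
    qed
    have "oc2 (\<lambda>q. q \<notin> Kset Xs Aix) False \<in> S \<rightarrow>\<^sub>M count_space UNIV"
      unfolding S_def OX_def OA_def XM_def by (rule oc2_measurable[OF F]) simp
    from measurable_sets[OF this, of "{True}"] show ?thesis
      unfolding Bd_def by (simp add: vimage_def Int_def conj_commute)
  qed
  have "emeasure \<nu> Bd = (\<integral>\<^sup>+\<omega>. emeasure (K \<omega>) Bd \<partial>P)"
    unfolding \<nu>_def by (rule emeasure_bind[OF spP Kmeas Bd])
  also have "\<dots> = (\<integral>\<^sup>+\<omega>. 0 \<partial>P)"
  proof (intro nn_integral_cong)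
    fix \<omega> assume w: "\<omega> \<in> space P"
    have "emeasure (K \<omega>) Bd = emeasure (b n \<omega>) ((\<lambda>a. (fst (\<omega> n), a)) -` Bd \<inter> space (b n \<omega>))"
      unfolding K_def by (rule emeasure_distr[OF Km[OF w] Bd])
    also have "\<dots> = emeasure (b n \<omega>) {a \<in> space (b n \<omega>). (fst (\<omega> n), a) \<in> Bd}"
      by (simp add: vimage_def Int_def conj_commute)
    also have "\<dots> = 0"
    proof (rule emeasure_eq_0_AE)
      have wT: "\<omega> \<in> space (trajM Xs Ai)" using w P_space by simp
      have sp: "\<omega> n \<in> space S" using measurable_space[OF comp w] .
      show "AE a in b n \<omega>. \<not> (fst (\<omega> n), a) \<in> Bd"
      proof (cases "fst (\<omega> n)")
        case None then show ?thesis by (simp add: Bd_def)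
      next
        case (Some x)
        have x: "x \<in> Xs" using sp Some unfolding S_def OX_def OA_def space_S by auto
        have C: "\<forall>n. \<forall>\<omega>\<in>space (trajM Xs Ai).
            (\<forall>x. fst (\<omega> n) = Some x \<longrightarrow> (AE a in b n \<omega>. a = None \<or> (\<exists>a'. a = Some a' \<and> a' \<in> Aix x))) \<and>
            (fst (\<omega> n) = None \<longrightarrow> (AE a in b n \<omega>. a = None))"
          using pol unfolding is_policy_def by (elim conjE)
        have "(\<forall>x. fst (\<omega> n) = Some x \<longrightarrow> (AE a in b n \<omega>. a = None \<or> (\<exists>a'. a = Some a' \<and> a' \<in> Aix x)))"
          using bspec[OF spec[OF C, of n] wT] by (rule conjunct1)
        then have "AE a in b n \<omega>. a = None \<or> (\<exists>a'. a = Some a' \<and> a' \<in> Aix x)"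
          using Some by simp
        then show ?thesis
          by (rule eventually_mono) (use x Some in \<open>auto simp: Bd_def Kset_def\<close>)
      qed
    qed
    finally show "emeasure (K \<omega>) Bd = 0" .
  qed
  finally have "emeasure \<mu> Bd = 0" using \<mu>\<nu> by simp
  then have N0: "emeasure P ((\<lambda>\<omega>. \<omega> n) -` Bd \<inter> space P) = 0"
    unfolding \<mu>_def by (simp add: emeasure_distr[OF comp Bd])
  show ?thesis
  proof (rule AE_I')
    show "(\<lambda>\<omega>. \<omega> n) -` Bd \<inter> space P \<in> null_sets P"
      using N0 measurable_sets[OF comp Bd] by auto
    show "{\<omega> \<in> space P. \<not> (\<forall>x a. \<omega> n = (Some x, Some a) \<longrightarrow> (x, a) \<in> Kset Xs Aix)}
          \<subseteq> (\<lambda>\<omega>. \<omega> n) -` Bd \<inter> space P"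
      using measurable_space[OF comp] by (auto simp: Bd_def)
  qed
qed

end


lemma imp_trans_meas:
  fixes Xs :: "'x::polish_space set" and Ai :: "'a::polish_space set"
  assumes Kb: "Ki \<in> sets borel" and Qk: "kernel_on Xs Ki Q"
    and Qp: "\<forall>(x, a)\<in>Ki. prob_space (Q x a)"
  shows "imp_trans Xs Ki Q \<in> optM (XM Xs) \<Otimes>\<^sub>M optM (restrict_space borel Ai) \<rightarrow>\<^sub>M subprob_algebra (optM (XM Xs))"
proof (rule measurable_subprob_algebra)
  have Qs: "sets (Q x a) = sets (XM Xs)" if "(x, a) \<in> Ki" for x a
    using Qk that unfolding kernel_on_def by auto
  have Qsp: "space (Q x a) = Xs" if "(x, a) \<in> Ki" for x a
    using sets_eq_imp_space_eq[OF Qs[OF that]] by (simp add: XM_def space_restrict_space)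
  have SomeQ: "Some \<in> Q x a \<rightarrow>\<^sub>M optM (XM Xs)" if "(x, a) \<in> Ki" for x a
    using Some_measurable_optM measurable_cong_sets[OF Qs[OF that] refl] by blast
  have NoneS: "None \<in> space (optM (XM Xs))" by (simp add: space_optM)
  fix p
  show "subprob_space (imp_trans Xs Ki Q p)"
  proof -
    have "prob_space (imp_trans Xs Ki Q p)"
      using Qp SomeQ NoneS
      by (auto simp: imp_trans_def split: option.splits prod.splits
               intro!: prob_space.prob_space_distr prob_space_return)
    then show ?thesis by (rule prob_space_imp_subprob_space)
  qed
  show "sets (imp_trans Xs Ki Q p) = sets (optM (XM Xs))"
    by (auto simp: imp_trans_def split: option.splits prod.splits)
next
  fix B assume B: "B \<in> sets (optM (XM Xs))"
  have Sm: "Some -` B \<inter> Xs \<in> sets (XM Xs)"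
    using measurable_sets[OF Some_measurable_optM B] by (simp add: XM_def space_restrict_space)
  have Qs: "sets (Q x a) = sets (XM Xs)" if "(x, a) \<in> Ki" for x a
    using Qk that unfolding kernel_on_def by auto
  have Qsp: "space (Q x a) = Xs" if "(x, a) \<in> Ki" for x a
    using sets_eq_imp_space_eq[OF Qs[OF that]] by (simp add: XM_def space_restrict_space)
  have SomeQ: "Some \<in> Q x a \<rightarrow>\<^sub>M optM (XM Xs)" if "(x, a) \<in> Ki" for x a
    using Some_measurable_optM measurable_cong_sets[OF Qs[OF that] refl] by blast
  define F where "F q = (if q \<in> Ki then emeasure (Q (fst q) (snd q)) (Some -` B \<inter> Xs) else indicator B None)" for q
  have Fm: "F \<in> borel \<rightarrow>\<^sub>M (borel :: ennreal measure)"
  proof -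
    have "(\<lambda>p. emeasure (Q (fst p) (snd p)) (Some -` B \<inter> Xs)) \<in> borel_measurable (restrict_space borel Ki)"
      using Qk Sm unfolding kernel_on_def by blast
    then show ?thesis
      using measurable_restrict_space_iff[where \<Omega>=Ki and M=borel and c="indicator B None" and N=borel
          and f="\<lambda>p. emeasure (Q (fst p) (snd p)) (Some -` B \<inter> Xs)"] Kb unfolding F_def by simp
  qed
  have "oc2 F (indicator B None) \<in> optM (XM Xs) \<Otimes>\<^sub>M optM (restrict_space borel Ai) \<rightarrow>\<^sub>M borel"
    unfolding XM_def by (rule oc2_measurable[OF Fm]) simp
  moreover have "emeasure (imp_trans Xs Ki Q p) B = oc2 F (indicator B None) p" for p
  proof -
    obtain o1 o2 where p: "p = (o1, o2)" by (cases p)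
    show ?thesis
    proof (cases "\<exists>x a. o1 = Some x \<and> o2 = Some a \<and> (x, a) \<in> Ki")
      case True
      then obtain x a where xa: "o1 = Some x" "o2 = Some a" "(x, a) \<in> Ki" by blast
      then show ?thesis using B
        by (simp add: p imp_trans_def F_def emeasure_distr[OF SomeQ[OF xa(3)] B] Qsp[OF xa(3)] Int_commute)
    next
      case False
      then have "imp_trans Xs Ki Q p = return (optM (XM Xs)) None"
        by (auto simp: p imp_trans_def split: option.splits)
      moreover have "oc2 F (indicator B None) p = indicator B None"
        using False by (cases o1; cases o2) (auto simp: p F_def)
      ultimately show ?thesis using B by simp
    qed
  qed
  ultimately show "(\<lambda>p. emeasure (imp_trans Xs Ki Q p) B) \<in> borel_measurable (optM (XM Xs) \<Otimes>\<^sub>M optM (restrict_space borel Ai))"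
    by simp
qed

context
  fixes Xs :: "'x::polish_space set" and Ai :: "'a::polish_space set" and Aix :: "'x \<Rightarrow> 'a set"
    and Q :: "'x \<Rightarrow> 'a \<Rightarrow> 'x measure" and b and z and P
  assumes pol: "is_policy Xs Ai Aix b"
    and str: "is_strategic Xs Ai (Kset Xs Aix) Q b z P"
    and Ki_meas: "Kset Xs Aix \<in> sets borel"
    and Qk: "kernel_on Xs (Kset Xs Aix) Q"
    and Qp: "\<forall>(x, a)\<in>Kset Xs Aix. prob_space (Q x a)"
begin

lemma TK_meas: "(\<lambda>\<omega>. imp_trans Xs (Kset Xs Aix) Q (\<omega> n)) \<in> P \<rightarrow>\<^sub>M subprob_algebra (optM (XM Xs))"
  using measurable_compose[OF comp_meas[OF pol str Ki_meas] imp_trans_meas[OF Ki_meas Qk Qp]] .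

lemma trans_eq:
  fixes h :: "_ \<Rightarrow> real" and f :: "'x option \<Rightarrow> ennreal"
  assumes hm: "h \<in> borel_measurable P" and h01: "\<And>\<omega>. 0 \<le> h \<omega> \<and> h \<omega> \<le> 1"
    and hh: "\<And>\<omega> \<omega>'. (\<forall>j\<le>n. \<omega> j = \<omega>' j) \<Longrightarrow> h \<omega> = h \<omega>'"
    and fm: "f \<in> borel_measurable (optM (XM Xs))"
  shows "(\<integral>\<^sup>+\<omega>. h \<omega> * f (fst (\<omega> (Suc n))) \<partial>P)
       = (\<integral>\<^sup>+\<omega>. h \<omega> * (\<integral>\<^sup>+u. f u \<partial>imp_trans Xs (Kset Xs Aix) Q (\<omega> n)) \<partial>P)"
proof -
  define OX where "OX = optM (XM Xs)"
  define TK where "TK \<omega> = imp_trans Xs (Kset Xs Aix) Q (\<omega> n)" for \<omega>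
  have TKm: "TK \<in> P \<rightarrow>\<^sub>M subprob_algebra OX" unfolding TK_def OX_def by (rule TK_meas)
  interpret P: prob_space P by (rule P_prob[OF pol str Ki_meas])
  have sn: "(\<lambda>\<omega>. fst (\<omega> (Suc n))) \<in> P \<rightarrow>\<^sub>M OX"
    using measurable_compose[OF comp_meas[OF pol str Ki_meas, of "Suc n"] measurable_fst] by (simp add: OX_def)
  define D where "D = density P (\<lambda>\<omega>. ennreal (h \<omega>))"
  have hm': "(\<lambda>\<omega>. ennreal (h \<omega>)) \<in> borel_measurable P" using hm by simp
  have Dsets: "sets D = sets P" by (simp add: D_def)
  have spD: "space D \<noteq> {}" using P.not_empty by (simp add: D_def)
  have TKmD: "TK \<in> D \<rightarrow>\<^sub>M subprob_algebra OX" using TKm measurable_cong_sets[OF Dsets refl] by blast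
  have snD: "(\<lambda>\<omega>. fst (\<omega> (Suc n))) \<in> D \<rightarrow>\<^sub>M OX" using sn measurable_cong_sets[OF Dsets refl] by blast
  have hT: "h \<in> borel_measurable (trajM Xs Ai)" using hm measurable_cong_sets[OF P_sets[OF pol str Ki_meas] refl] by blast
  have M12: "distr D OX (\<lambda>\<omega>. fst (\<omega> (Suc n))) = bind D TK"
  proof (rule measure_eqI)
    show "sets (distr D OX (\<lambda>\<omega>. fst (\<omega> (Suc n)))) = sets (bind D TK)"
      using sets_bind_measurable[OF TKmD spD] by simp
    fix B assume "B \<in> sets (distr D OX (\<lambda>\<omega>. fst (\<omega> (Suc n))))"
    then have B: "B \<in> sets OX" by simp
    have m1: "(\<lambda>\<omega>. indicator B (fst (\<omega> (Suc n))) :: real) \<in> borel_measurable P"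
      using measurable_compose[OF sn borel_measurable_indicator[OF B]] by simp
    have m2: "(\<lambda>\<omega>. measure (TK \<omega>) B) \<in> borel_measurable P"
      using measurable_compose[OF TKm measurable_measure_subprob_algebra[OF B]] .
    have TKsub: "subprob_space (TK \<omega>)" if "\<omega> \<in> space P" for \<omega>
      using measurable_space[OF TKm that] by (simp add: space_subprob_algebra)
    have i1: "integrable P (\<lambda>\<omega>. h \<omega> * indicator B (fst (\<omega> (Suc n))))"
    proof (rule P.integrable_const_bound[where B=1])
      show "AE x in P. norm (h x * indicator B (fst (x (Suc n)))) \<le> 1"
        using h01 by (auto simp: indicator_def intro!: AE_I2)
    qed (intro borel_measurable_times hm m1)
    have i2: "integrable P (\<lambda>\<omega>. h \<omega> * measure (TK \<omega>) B)"
    proof (rule P.integrable_const_bound[where B=1])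
      show "AE x in P. norm (h x * measure (TK x) B) \<le> 1"
      proof (rule AE_I2)
        fix x assume x: "x \<in> space P"
        have "measure (TK x) B \<le> 1" using subprob_space.subprob_measure_le_1[OF TKsub[OF x]] .
        then show "norm (h x * measure (TK x) B) \<le> 1"
          using h01[of x] by (simp add: abs_mult mult_le_one)
      qed
    qed (intro borel_measurable_times hm m2)
    have eqint: "(\<integral>\<omega>. h \<omega> * indicator B (fst (\<omega> (Suc n))) \<partial>P) = (\<integral>\<omega>. h \<omega> * measure (TK \<omega>) B \<partial>P)"
    proof -
      have "bounded (range h)" using h01 by (auto simp: bounded_iff intro!: exI[of _ 1])
      then show ?thesis using str hT B hh unfolding is_strategic_def TK_def OX_def by blast
    qed
    have "emeasure (distr D OX (\<lambda>\<omega>. fst (\<omega> (Suc n)))) B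
        = (\<integral>\<^sup>+u. indicator B u \<partial>distr D OX (\<lambda>\<omega>. fst (\<omega> (Suc n))))"
      using B by (simp add: nn_integral_indicator)
    also have "\<dots> = (\<integral>\<^sup>+\<omega>. indicator B (fst (\<omega> (Suc n))) \<partial>D)"
      by (rule nn_integral_distr[OF snD]) (use B in simp)
    also have "\<dots> = (\<integral>\<^sup>+\<omega>. ennreal (h \<omega>) * indicator B (fst (\<omega> (Suc n))) \<partial>P)"
      unfolding D_def by (rule nn_integral_density[OF hm' measurable_compose[OF sn borel_measurable_indicator[OF B]]])
    also have "\<dots> = (\<integral>\<^sup>+\<omega>. ennreal (h \<omega> * indicator B (fst (\<omega> (Suc n)))) \<partial>P)"
      by (intro nn_integral_cong) (simp add: ennreal_mult h01 indicator_def)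
    also have "\<dots> = ennreal (\<integral>\<omega>. h \<omega> * indicator B (fst (\<omega> (Suc n))) \<partial>P)"
      by (rule nn_integral_eq_integral[OF i1]) (auto simp: h01)
    also have "\<dots> = ennreal (\<integral>\<omega>. h \<omega> * measure (TK \<omega>) B \<partial>P)" by (simp add: eqint)
    also have "\<dots> = (\<integral>\<^sup>+\<omega>. ennreal (h \<omega> * measure (TK \<omega>) B) \<partial>P)"
      by (rule nn_integral_eq_integral[OF i2, symmetric]) (auto simp: h01)
    also have "\<dots> = (\<integral>\<^sup>+\<omega>. ennreal (h \<omega>) * emeasure (TK \<omega>) B \<partial>P)"
    proof (intro nn_integral_cong)
      fix \<omega> assume w: "\<omega> \<in> space P"
      interpret T: subprob_space "TK \<omega>" by (rule TKsub[OF w])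
      show "ennreal (h \<omega> * measure (TK \<omega>) B) = ennreal (h \<omega>) * emeasure (TK \<omega>) B"
        using h01[of \<omega>] by (simp add: T.emeasure_eq_measure ennreal_mult)
    qed
    also have "\<dots> = (\<integral>\<^sup>+\<omega>. emeasure (TK \<omega>) B \<partial>D)"
      unfolding D_def by (rule nn_integral_density[OF hm' measurable_compose[OF TKm measurable_emeasure_subprob_algebra[OF B]], symmetric])
    also have "\<dots> = emeasure (bind D TK) B"
      by (rule emeasure_bind[OF spD TKmD B, symmetric])
    finally show "emeasure (distr D OX (\<lambda>\<omega>. fst (\<omega> (Suc n)))) B = emeasure (bind D TK) B" .
  qed
  have "(\<integral>\<^sup>+\<omega>. h \<omega> * f (fst (\<omega> (Suc n))) \<partial>P) = (\<integral>\<^sup>+\<omega>. f (fst (\<omega> (Suc n))) \<partial>D)"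
    unfolding D_def by (rule nn_integral_density[OF hm' measurable_compose[OF sn fm[folded OX_def]], symmetric])
  also have "\<dots> = (\<integral>\<^sup>+u. f u \<partial>distr D OX (\<lambda>\<omega>. fst (\<omega> (Suc n))))"
  proof -
    have fmd: "f \<in> borel_measurable (distr D OX (\<lambda>\<omega>. fst (\<omega> (Suc n))))"
      using fm unfolding OX_def by simp
    show ?thesis by (rule nn_integral_distr[OF snD fmd, symmetric])
  qed
  also have "\<dots> = (\<integral>\<^sup>+u. f u \<partial>bind D TK)" by (simp add: M12)
  also have "\<dots> = (\<integral>\<^sup>+\<omega>. (\<integral>\<^sup>+u. f u \<partial>TK \<omega>) \<partial>D)"
    by (rule nn_integral_bind[OF fm[folded OX_def] TKmD])
  also have "\<dots> = (\<integral>\<^sup>+\<omega>. h \<omega> * (\<integral>\<^sup>+u. f u \<partial>TK \<omega>) \<partial>P)"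
    unfolding D_def by (rule nn_integral_density[OF hm' measurable_compose[OF TKm nn_integral_measurable_subprob_algebra[OF fm[folded OX_def]]]])
  finally show ?thesis by (simp add: TK_def)
qed

end


definition Uo :: "('x \<Rightarrow> real) \<Rightarrow> 'x option \<Rightarrow> ennreal" where
  "Uo U u = (case u of None \<Rightarrow> 0 | Some x \<Rightarrow> ennreal (U x))"
definition stU :: "('x \<Rightarrow> real) \<Rightarrow> 'x option \<times> 'a option \<Rightarrow> ennreal" where
  "stU U p = (if snd p = None then Uo U (fst p) else 0)"
definition actU :: "('x \<Rightarrow> real) \<Rightarrow> 'x option \<times> 'a option \<Rightarrow> ennreal" where
  "actU U p = (if snd p \<noteq> None then Uo U (fst p) else 0)"
definition cio :: "('x \<times> 'a) set \<Rightarrow> ('x \<Rightarrow> 'a \<Rightarrow> real) \<Rightarrow> 'x option \<times> 'a option \<Rightarrow> ennreal" where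
  "cio Ki ci = oc2 (\<lambda>q. if q \<in> Ki then ennreal (ci (fst q) (snd q)) else 0) 0"
definition Zf :: "('x \<Rightarrow> real) \<Rightarrow> ('x \<times> 'a) set \<Rightarrow> ('x \<Rightarrow> 'a \<Rightarrow> real) \<Rightarrow> nat \<Rightarrow> ('x, 'a) traj \<Rightarrow> ennreal" where
  "Zf U Ki ci n \<omega> = (\<Sum>j<n. cio Ki ci (\<omega> j) + stU U (\<omega> j)) + Uo U (fst (\<omega> n))"

lemma Uo_simps[simp]: "Uo U None = 0" "Uo U (Some x) = ennreal (U x)"
  by (simp_all add: Uo_def)

lemma Uo_split: "Uo U (fst p) = stU U p + actU U p"
  by (simp add: stU_def actU_def)

lemma Zf_step: "Zf U Ki ci (Suc n) \<omega> + actU U (\<omega> n) = Zf U Ki ci n \<omega> + cio Ki ci (\<omega> n) + Uo U (fst (\<omega> (Suc n)))"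
  by (simp add: Zf_def Uo_split[of U "\<omega> n"] ac_simps)

lemma Uo_meas:
  assumes "U \<in> borel_measurable M"
  shows "Uo U \<in> borel_measurable (optM M)"
proof -
  have eq: "Uo U = (\<lambda>u. case u of None \<Rightarrow> 0 | Some x \<Rightarrow> ennreal (U x))"
    by (auto simp: fun_eq_iff Uo_def)
  show ?thesis unfolding eq
    by (rule measurable_case_option_optM) (auto intro: measurable_compose[OF assms measurable_ennreal])
qed

lemma stU_meas:
  assumes "U \<in> borel_measurable M"
  shows "stU U \<in> borel_measurable (optM M \<Otimes>\<^sub>M optM N)"
proof -
  have eq: "stU U = (\<lambda>p. if snd p = None then Uo U (fst p) else 0)"
    by (auto simp: fun_eq_iff stU_def)
  have "{p \<in> space (optM M \<Otimes>\<^sub>M optM N). snd p = None} = space (optM M) \<times> {None}"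
    by (auto simp: space_pair_measure space_optM)
  moreover have "space (optM M) \<times> {None} \<in> sets (optM M \<Otimes>\<^sub>M optM N)"
    by (intro pair_measureI sets.top None_sets_optM)
  ultimately show ?thesis unfolding eq
    by (intro measurable_If measurable_compose[OF measurable_fst Uo_meas[OF assms]]) auto
qed

lemma actU_meas:
  assumes "U \<in> borel_measurable M"
  shows "actU U \<in> borel_measurable (optM M \<Otimes>\<^sub>M optM N)"
proof -
  have eq: "actU U = (\<lambda>p. if snd p \<noteq> None then Uo U (fst p) else 0)"
    by (auto simp: fun_eq_iff actU_def)
  have "{p \<in> space (optM M \<Otimes>\<^sub>M optM N). snd p \<noteq> None} = space (optM M) \<times> (space (optM N) - {None})"
    by (auto simp: space_pair_measure)
  moreover have "space (optM M) \<times> (space (optM N) - {None}) \<in> sets (optM M \<Otimes>\<^sub>M optM N)"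
    by (intro pair_measureI sets.top sets.Diff None_sets_optM)
  ultimately show ?thesis unfolding eq
    by (intro measurable_If measurable_compose[OF measurable_fst Uo_meas[OF assms]]) auto
qed

lemma cio_meas:
  fixes Xs :: "'x::second_countable_topology set" and Ai :: "'a::second_countable_topology set"
  assumes Kb: "Ki \<in> sets borel"
    and cim: "(\<lambda>p. ci (fst p) (snd p)) \<in> borel_measurable (restrict_space borel Ki)"
  shows "cio Ki ci \<in> borel_measurable (optM (XM Xs) \<Otimes>\<^sub>M optM (restrict_space borel Ai))"
  unfolding cio_def XM_def
proof (rule oc2_measurable)
  show "(\<lambda>q. if q \<in> Ki then ennreal (ci (fst q) (snd q)) else 0) \<in> borel \<rightarrow>\<^sub>M (borel :: ennreal measure)"
    using measurable_restrict_space_iff[where \<Omega>=Ki and M=borel and c=0 and N=borel and f="\<lambda>q. ennreal (ci (fst q) (snd q))"]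
      measurable_compose[OF cim measurable_ennreal] Kb by simp
qed simp

lemma Zf_meas:
  fixes Xs :: "'x::second_countable_topology set" and Ai :: "'a::second_countable_topology set"
  assumes Kb: "Ki \<in> sets borel"
    and cim: "(\<lambda>p. ci (fst p) (snd p)) \<in> borel_measurable (restrict_space borel Ki)"
    and Um: "U \<in> borel_measurable (XM Xs)"
  shows "Zf U Ki ci n \<in> borel_measurable (trajM Xs Ai)"
proof -
  have c: "(\<lambda>\<omega>. \<omega> j) \<in> trajM Xs Ai \<rightarrow>\<^sub>M optM (XM Xs) \<Otimes>\<^sub>M optM (restrict_space borel Ai)" for j
    by (rule traj_component_measurable)
  have eq: "Zf U Ki ci n = (\<lambda>\<omega>. (\<Sum>j<n. cio Ki ci (\<omega> j) + stU U (\<omega> j)) + Uo U (fst (\<omega> n)))"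
    by (auto simp: fun_eq_iff Zf_def)
  show ?thesis unfolding eq
    by (intro borel_measurable_add borel_measurable_sum
        measurable_compose[OF c cio_meas[OF Kb cim]] measurable_compose[OF c stU_meas[OF Um]]
        measurable_compose[OF measurable_compose[OF c measurable_fst] Uo_meas[OF Um]])
qed

lemma Y_analysis:
  assumes Y: "\<omega> \<in> Yset Xs Ai"
    and good: "\<forall>j x a. \<omega> j = (Some x, Some a) \<longrightarrow> (x, a) \<in> Ki"
    and ci0: "\<forall>(x, a)\<in>Ki. 0 \<le> ci x a"
    and U0: "\<forall>x\<in>Xs. 0 \<le> U x \<and> U x \<le> C0"
  shows "\<exists>k. (\<forall>n\<ge>k. Zf U Ki ci n \<omega> = ennreal (U (xbar \<omega>) + Ci ci \<omega>))
      \<and> (\<forall>n<k. Zf U Ki ci n \<omega> \<le> ennreal (U (xbar \<omega>) + Ci ci \<omega>) + ennreal C0 \<and> snd (\<omega> n) \<noteq> None)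
      \<and> (\<forall>m\<ge>k. snd (\<omega> m) = None) \<and> 0 \<le> U (xbar \<omega>) + Ci ci \<omega>"
proof -
  from Y obtain k xk where
    pre: "\<forall>j<k. \<exists>x a. \<omega> j = (Some x, Some a) \<and> x \<in> Xs \<and> a \<in> Ai"
    and wk: "\<omega> k = (Some xk, None)" "xk \<in> Xs"
    and post: "\<forall>j>k. \<omega> j = (None, None)"
    unfolding Yset_def by blast
  have ys: "ystop \<omega> = k"
    unfolding ystop_def
  proof (rule Least_equality)
    show "snd (\<omega> k) = None" using wk by simp
    fix m assume "snd (\<omega> m) = None"
    then show "k \<le> m" using pre by (metis leI option.distinct(1) snd_conv)
  qed
  have xb: "xbar \<omega> = xk" by (simp add: xbar_def ys wk)
  define cj where "cj j = ci (the (fst (\<omega> j))) (the (snd (\<omega> j)))" for j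
  have Cik: "Ci ci \<omega> = (\<Sum>j<k. cj j)" by (simp add: Ci_def ys cj_def)
  have cj0: "0 \<le> cj j" if "j < k" for j
  proof -
    from pre that obtain x a where "\<omega> j = (Some x, Some a)" by blast
    with good ci0 show ?thesis by (auto simp: cj_def)
  qed
  have cioj: "cio Ki ci (\<omega> j) = ennreal (cj j)" "stU U (\<omega> j) = 0" if "j < k" for j
  proof -
    from pre that obtain x a where "\<omega> j = (Some x, Some a)" by blast
    with good show "cio Ki ci (\<omega> j) = ennreal (cj j)" "stU U (\<omega> j) = 0"
      by (auto simp: cj_def cio_def stU_def)
  qed
  have Sn: "(\<Sum>j<n. cio Ki ci (\<omega> j) + stU U (\<omega> j))
      = ennreal (\<Sum>j<min n k. cj j) + (if k < n then ennreal (U xk) else 0)" for n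
  proof (induction n)
    case 0 then show ?case by simp
  next
    case (Suc n)
    consider "n < k" | "n = k" | "k < n" by linarith
    then show ?case
    proof cases
      case 1
      have "(\<Sum>j<min (Suc n) k. cj j) = (\<Sum>j<min n k. cj j) + cj n"
        using 1 by (simp add: min_def)
      moreover have "0 \<le> (\<Sum>j<min n k. cj j)" using cj0 by (intro sum_nonneg) auto
      ultimately show ?thesis using 1 Suc cioj[OF 1] cj0[OF 1] by simp
    next
      case 2
      then show ?thesis using Suc wk by (simp add: cio_def stU_def min_def)
    next
      case 3
      then have "\<omega> n = (None, None)" using post by simp
      then show ?thesis using Suc 3 by (simp add: cio_def stU_def min_def)
    qed
  qed
  have sum0: "0 \<le> (\<Sum>j<k. cj j)" using cj0 by (intro sum_nonneg) auto
  have Uk: "0 \<le> U xk" "U xk \<le> C0" using U0 wk by auto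
  have f': "ennreal (U (xbar \<omega>) + Ci ci \<omega>) = ennreal (\<Sum>j<k. cj j) + ennreal (U xk)"
    using sum0 Uk by (simp add: xb Cik add.commute)
  show ?thesis
  proof (intro exI[of _ k] conjI allI impI)
    fix n assume n: "k \<le> n"
    show "Zf U Ki ci n \<omega> = ennreal (U (xbar \<omega>) + Ci ci \<omega>)"
    proof (cases "n = k")
      case True then show ?thesis using wk by (simp add: Zf_def Sn f')
    next
      case False
      then have "\<omega> n = (None, None)" using post n by simp
      then show ?thesis using False n by (simp add: Zf_def Sn f' min_def)
    qed
  next
    fix n assume n: "n < k"
    from pre n obtain x a where xa: "\<omega> n = (Some x, Some a)" "x \<in> Xs" by blast
    show "snd (\<omega> n) \<noteq> None" using xa by simp
    have "Zf U Ki ci n \<omega> = ennreal (\<Sum>j<n. cj j) + ennreal (U x)"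
      using n xa by (simp add: Zf_def Sn min_def)
    also have "\<dots> \<le> ennreal (U (xbar \<omega>) + Ci ci \<omega>) + ennreal C0"
    proof (rule add_mono)
      have "(\<Sum>j<n. cj j) \<le> (\<Sum>j<k. cj j)"
        using n cj0 by (intro sum_mono2) auto
      also have "\<dots> \<le> U (xbar \<omega>) + Ci ci \<omega>" using Uk by (simp add: xb Cik)
      finally show "ennreal (\<Sum>j<n. cj j) \<le> ennreal (U (xbar \<omega>) + Ci ci \<omega>)" by (rule ennreal_leI)
      show "ennreal (U x) \<le> ennreal C0" using U0 xa by (auto intro: ennreal_leI)
    qed
    finally show "Zf U Ki ci n \<omega> \<le> ennreal (U (xbar \<omega>) + Ci ci \<omega>) + ennreal C0" .
  next
    fix m assume "k \<le> m"
    then show "snd (\<omega> m) = None" using wk post by (cases "m = k") auto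
  next
    show "0 \<le> U (xbar \<omega>) + Ci ci \<omega>" using sum0 Uk by (simp add: xb Cik)
  qed
qed


context
  fixes Xs :: "'x::polish_space set" and Ai :: "'a::polish_space set" and Aix :: "'x \<Rightarrow> 'a set"
    and Q :: "'x \<Rightarrow> 'a \<Rightarrow> 'x measure" and b and z and P and U :: "'x \<Rightarrow> real"
    and ci :: "'x \<Rightarrow> 'a \<Rightarrow> real" and C0 :: real
  assumes pol: "is_policy Xs Ai Aix b"
    and str: "is_strategic Xs Ai (Kset Xs Aix) Q b z P"
    and Ki_meas: "Kset Xs Aix \<in> sets borel"
    and Qk: "kernel_on Xs (Kset Xs Aix) Q"
    and Qp: "\<forall>(x, a)\<in>Kset Xs Aix. prob_space (Q x a)"
    and Y1: "emeasure P (Yset Xs Ai) = 1"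
    and z: "z \<in> Xs"
    and Um: "U \<in> borel_measurable (XM Xs)"
    and U0: "\<forall>x\<in>Xs. 0 \<le> U x \<and> U x \<le> C0"
    and cim: "(\<lambda>p. ci (fst p) (snd p)) \<in> borel_measurable (restrict_space borel (Kset Xs Aix))"
    and ci0: "\<forall>(x, a)\<in>Kset Xs Aix. 0 \<le> ci x a"
    and bell: "\<forall>(x, a)\<in>Kset Xs Aix. U x \<le> (\<integral>u. U u \<partial>Q x a) + ci x a"
begin

lemma ZP_meas: "Zf U (Kset Xs Aix) ci n \<in> borel_measurable P"
  using Zf_meas[OF Ki_meas cim Um] measurable_cong_sets[OF P_sets[OF pol str Ki_meas] refl] by blast

lemma act_set: "{\<omega> \<in> space P. snd (\<omega> n) \<noteq> None} \<in> sets P"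
proof -
  have comp: "(\<lambda>\<omega>. \<omega> n) \<in> P \<rightarrow>\<^sub>M optM (XM Xs) \<Otimes>\<^sub>M optM (restrict_space borel Ai)"
    by (rule comp_meas[OF pol str Ki_meas])
  have S: "space (optM (XM Xs)) \<times> (space (optM (restrict_space borel Ai)) - {None})
      \<in> sets (optM (XM Xs) \<Otimes>\<^sub>M optM (restrict_space borel Ai))"
    by (intro pair_measureI sets.top sets.Diff None_sets_optM)
  have "(\<lambda>\<omega>. \<omega> n) -` (space (optM (XM Xs)) \<times> (space (optM (restrict_space borel Ai)) - {None})) \<inter> space P
      = {\<omega> \<in> space P. snd (\<omega> n) \<noteq> None}"
  proof (intro set_eqI iffI)
    fix \<omega> assume "\<omega> \<in> {\<omega> \<in> space P. snd (\<omega> n) \<noteq> None}"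
    then have w: "\<omega> \<in> space P" and s: "snd (\<omega> n) \<noteq> None" by auto
    have "\<omega> n \<in> space (optM (XM Xs)) \<times> space (optM (restrict_space borel Ai))"
      using measurable_space[OF comp w] by (simp add: space_pair_measure)
    then show "\<omega> \<in> (\<lambda>\<omega>. \<omega> n) -` (space (optM (XM Xs)) \<times> (space (optM (restrict_space borel Ai)) - {None})) \<inter> space P"
      using w s by (auto simp: mem_Times_iff)
  qed auto
  then show ?thesis using measurable_sets[OF comp S] by simp
qed

lemma step_ineq:
  "(\<integral>\<^sup>+\<omega>. actU U (\<omega> n) \<partial>P)
    \<le> (\<integral>\<^sup>+\<omega>. cio (Kset Xs Aix) ci (\<omega> n) \<partial>P) + (\<integral>\<^sup>+\<omega>. Uo U (fst (\<omega> (Suc n))) \<partial>P)"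
proof -
  define OX where "OX = optM (XM Xs)"
  define TK where "TK \<omega> = imp_trans Xs (Kset Xs Aix) Q (\<omega> n)" for \<omega>
  have comp: "(\<lambda>\<omega>. \<omega> j) \<in> P \<rightarrow>\<^sub>M optM (XM Xs) \<Otimes>\<^sub>M optM (restrict_space borel Ai)" for j
    by (rule comp_meas[OF pol str Ki_meas])
  have TKm: "TK \<in> P \<rightarrow>\<^sub>M subprob_algebra OX"
    unfolding TK_def OX_def by (rule TK_meas[OF pol str Ki_meas Qk Qp])
  have Uom: "Uo U \<in> borel_measurable OX" unfolding OX_def by (rule Uo_meas[OF Um])
  define h :: "('x, 'a) traj \<Rightarrow> real" where "h \<omega> = (if snd (\<omega> n) \<noteq> None then 1 else 0)" for \<omega>
  have hm: "h \<in> borel_measurable P"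
    unfolding h_def by (intro measurable_If act_set) auto
  have tr: "(\<integral>\<^sup>+\<omega>. h \<omega> * Uo U (fst (\<omega> (Suc n))) \<partial>P)
       = (\<integral>\<^sup>+\<omega>. h \<omega> * (\<integral>\<^sup>+u. Uo U u \<partial>TK \<omega>) \<partial>P)"
    unfolding TK_def
    by (rule trans_eq[OF pol str Ki_meas Qk Qp hm _ _ Uo_meas[OF Um]]) (auto simp: h_def)
  have cm: "(\<lambda>\<omega>. cio (Kset Xs Aix) ci (\<omega> n)) \<in> borel_measurable P"
    by (rule measurable_compose[OF comp cio_meas[OF Ki_meas cim]])
  have im: "(\<lambda>\<omega>. ennreal (h \<omega>) * (\<integral>\<^sup>+u. Uo U u \<partial>TK \<omega>)) \<in> borel_measurable P"
    by (rule borel_measurable_times_ennreal[OF measurable_compose[OF hm measurable_ennreal]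
          measurable_compose[OF TKm nn_integral_measurable_subprob_algebra[OF Uom]]])
  have ptw: "actU U (\<omega> n) \<le> cio (Kset Xs Aix) ci (\<omega> n) + ennreal (h \<omega>) * (\<integral>\<^sup>+u. Uo U u \<partial>TK \<omega>)"
    if w: "\<omega> \<in> space P" and ok: "\<forall>x a. \<omega> n = (Some x, Some a) \<longrightarrow> (x, a) \<in> Kset Xs Aix" for \<omega>
  proof (cases "\<exists>x a. \<omega> n = (Some x, Some a)")
    case False
    then have "actU U (\<omega> n) = 0"
      by (cases "\<omega> n") (auto simp: actU_def split: option.splits)
    then show ?thesis by simp
  next
    case True
    then obtain x a where xa: "\<omega> n = (Some x, Some a)" by blast
    with ok have K: "(x, a) \<in> Kset Xs Aix" by blast
    interpret Qx: prob_space "Q x a" using Qp K by auto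
    have Qs: "sets (Q x a) = sets (XM Xs)" using Qk K unfolding kernel_on_def by auto
    have Qsp: "space (Q x a) = Xs"
      using sets_eq_imp_space_eq[OF Qs] by (simp add: XM_def space_restrict_space)
    have SomeQ: "Some \<in> Q x a \<rightarrow>\<^sub>M OX"
      unfolding OX_def using Some_measurable_optM measurable_cong_sets[OF Qs refl] by blast
    have UQ: "U \<in> borel_measurable (Q x a)" using Um measurable_cong_sets[OF Qs refl] by blast
    have intU: "integrable (Q x a) U"
    proof (rule Qx.integrable_const_bound[where B=C0])
      show "AE u in Q x a. norm (U u) \<le> C0" using U0 Qsp by (auto intro!: AE_I2)
    qed (rule UQ)
    have TKeq: "TK \<omega> = distr (Q x a) OX Some" using xa K by (simp add: TK_def imp_trans_def OX_def)
    have "(\<integral>\<^sup>+u. Uo U u \<partial>TK \<omega>) = (\<integral>\<^sup>+u. Uo U (Some u) \<partial>Q x a)"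
    proof -
      have Uomd: "Uo U \<in> borel_measurable (distr (Q x a) OX Some)" using Uom by simp
      show ?thesis unfolding TKeq by (rule nn_integral_distr[OF SomeQ Uomd])
    qed
    also have "\<dots> = (\<integral>\<^sup>+u. ennreal (U u) \<partial>Q x a)" by simp
    also have "\<dots> = ennreal (\<integral>u. U u \<partial>Q x a)"
      by (rule nn_integral_eq_integral[OF intU]) (use U0 Qsp in \<open>auto intro!: AE_I2\<close>)
    finally have I: "(\<integral>\<^sup>+u. Uo U u \<partial>TK \<omega>) = ennreal (\<integral>u. U u \<partial>Q x a)" .
    have I0: "0 \<le> (\<integral>u. U u \<partial>Q x a)" using U0 Qsp by (intro integral_nonneg_AE) (auto intro!: AE_I2)
    have c0: "0 \<le> ci x a" using ci0 K by auto
    have "U x \<le> ci x a + (\<integral>u. U u \<partial>Q x a)" using bell K by auto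
    then have "ennreal (U x) \<le> ennreal (ci x a + (\<integral>u. U u \<partial>Q x a))" by (rule ennreal_leI)
    then show ?thesis using xa K I I0 c0 by (simp add: actU_def cio_def h_def)
  qed
  have AEok: "AE \<omega> in P. \<forall>x a. \<omega> n = (Some x, Some a) \<longrightarrow> (x, a) \<in> Kset Xs Aix"
    by (rule action_ok[OF pol str Ki_meas])
  have s1: "(\<integral>\<^sup>+\<omega>. actU U (\<omega> n) \<partial>P)
      \<le> (\<integral>\<^sup>+\<omega>. cio (Kset Xs Aix) ci (\<omega> n) + ennreal (h \<omega>) * (\<integral>\<^sup>+u. Uo U u \<partial>TK \<omega>) \<partial>P)"
  proof (rule nn_integral_mono_AE)
    show "AE \<omega> in P. actU U (\<omega> n) \<le> cio (Kset Xs Aix) ci (\<omega> n) + ennreal (h \<omega>) * (\<integral>\<^sup>+u. Uo U u \<partial>TK \<omega>)"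
      using AEok AE_space
    proof eventually_elim
      case (elim \<omega>) then show ?case by (intro ptw) auto
    qed
  qed
  have s2: "(\<integral>\<^sup>+\<omega>. cio (Kset Xs Aix) ci (\<omega> n) + ennreal (h \<omega>) * (\<integral>\<^sup>+u. Uo U u \<partial>TK \<omega>) \<partial>P)
      = (\<integral>\<^sup>+\<omega>. cio (Kset Xs Aix) ci (\<omega> n) \<partial>P) + (\<integral>\<^sup>+\<omega>. ennreal (h \<omega>) * (\<integral>\<^sup>+u. Uo U u \<partial>TK \<omega>) \<partial>P)"
    by (rule nn_integral_add[OF cm im])
  have s3: "(\<integral>\<^sup>+\<omega>. ennreal (h \<omega>) * (\<integral>\<^sup>+u. Uo U u \<partial>TK \<omega>) \<partial>P) = (\<integral>\<^sup>+\<omega>. ennreal (h \<omega>) * Uo U (fst (\<omega> (Suc n))) \<partial>P)"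
    using tr by (rule sym)
  have s4: "(\<integral>\<^sup>+\<omega>. ennreal (h \<omega>) * Uo U (fst (\<omega> (Suc n))) \<partial>P) \<le> (\<integral>\<^sup>+\<omega>. Uo U (fst (\<omega> (Suc n))) \<partial>P)"
    by (intro nn_integral_mono) (simp add: h_def)
  show ?thesis using s1 unfolding s2 s3 using add_left_mono[OF s4] by (rule order_trans)
qed

lemma Z_mono: "(\<integral>\<^sup>+\<omega>. Zf U (Kset Xs Aix) ci n \<omega> \<partial>P) \<le> (\<integral>\<^sup>+\<omega>. Zf U (Kset Xs Aix) ci (Suc n) \<omega> \<partial>P)"
proof -
  have comp: "(\<lambda>\<omega>. \<omega> j) \<in> P \<rightarrow>\<^sub>M optM (XM Xs) \<Otimes>\<^sub>M optM (restrict_space borel Ai)" for j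
    by (rule comp_meas[OF pol str Ki_meas])
  have am: "(\<lambda>\<omega>. actU U (\<omega> n)) \<in> borel_measurable P"
    by (rule measurable_compose[OF comp actU_meas[OF Um]])
  have cm: "(\<lambda>\<omega>. cio (Kset Xs Aix) ci (\<omega> n)) \<in> borel_measurable P"
    by (rule measurable_compose[OF comp cio_meas[OF Ki_meas cim]])
  have um: "(\<lambda>\<omega>. Uo U (fst (\<omega> (Suc n)))) \<in> borel_measurable P"
    by (rule measurable_compose[OF measurable_compose[OF comp measurable_fst] Uo_meas[OF Um]])
  interpret P: prob_space P by (rule P_prob[OF pol str Ki_meas])
  have fin: "(\<integral>\<^sup>+\<omega>. actU U (\<omega> n) \<partial>P) \<noteq> \<infinity>"
  proof -
    have "(\<integral>\<^sup>+\<omega>. actU U (\<omega> n) \<partial>P) \<le> (\<integral>\<^sup>+\<omega>. ennreal C0 \<partial>P)"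
    proof (rule nn_integral_mono)
      fix \<omega> assume w: "\<omega> \<in> space P"
      have "\<omega> n \<in> space (optM (XM Xs) \<Otimes>\<^sub>M optM (restrict_space borel Ai))"
        using measurable_space[OF comp w] .
      then show "actU U (\<omega> n) \<le> ennreal C0"
        using U0 by (auto simp: actU_def space_pair_measure space_optM XM_def space_restrict_space intro: ennreal_leI)
    qed
    also have "\<dots> = ennreal C0" by (simp add: P.emeasure_space_1)
    finally show ?thesis unfolding infinity_ennreal_def by (rule neq_top_trans[OF ennreal_neq_top])
  qed
  have "(\<integral>\<^sup>+\<omega>. actU U (\<omega> n) \<partial>P) + (\<integral>\<^sup>+\<omega>. Zf U (Kset Xs Aix) ci n \<omega> \<partial>P)
      = (\<integral>\<^sup>+\<omega>. Zf U (Kset Xs Aix) ci n \<omega> \<partial>P) + (\<integral>\<^sup>+\<omega>. actU U (\<omega> n) \<partial>P)"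
    by (rule add.commute)
  also have "\<dots> \<le> (\<integral>\<^sup>+\<omega>. Zf U (Kset Xs Aix) ci n \<omega> \<partial>P) + ((\<integral>\<^sup>+\<omega>. cio (Kset Xs Aix) ci (\<omega> n) \<partial>P) + (\<integral>\<^sup>+\<omega>. Uo U (fst (\<omega> (Suc n))) \<partial>P))"
    by (rule add_left_mono[OF step_ineq])
  also have "\<dots> = (\<integral>\<^sup>+\<omega>. Zf U (Kset Xs Aix) ci n \<omega> + cio (Kset Xs Aix) ci (\<omega> n) + Uo U (fst (\<omega> (Suc n))) \<partial>P)"
    by (subst nn_integral_add[OF borel_measurable_add[OF ZP_meas cm] um], subst nn_integral_add[OF ZP_meas cm], simp add: add.assoc)
  also have "\<dots> = (\<integral>\<^sup>+\<omega>. Zf U (Kset Xs Aix) ci (Suc n) \<omega> + actU U (\<omega> n) \<partial>P)"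
    by (simp add: Zf_step)
  also have "\<dots> = (\<integral>\<^sup>+\<omega>. actU U (\<omega> n) \<partial>P) + (\<integral>\<^sup>+\<omega>. Zf U (Kset Xs Aix) ci (Suc n) \<omega> \<partial>P)"
    by (subst nn_integral_add[OF ZP_meas am]) (simp add: add.commute)
  finally show ?thesis using fin by (simp add: ennreal_add_left_cancel_le)
qed

lemma Z0: "(\<integral>\<^sup>+\<omega>. Zf U (Kset Xs Aix) ci 0 \<omega> \<partial>P) = ennreal (U z)"
proof -
  interpret P: prob_space P by (rule P_prob[OF pol str Ki_meas])
  have "AE \<omega> in P. fst (\<omega> 0) = Some z" using str by (simp add: is_strategic_def)
  then have "(\<integral>\<^sup>+\<omega>. Zf U (Kset Xs Aix) ci 0 \<omega> \<partial>P) = (\<integral>\<^sup>+\<omega>. ennreal (U z) \<partial>P)"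
    by (intro nn_integral_cong_AE) (auto simp: Zf_def elim!: eventually_mono)
  then show ?thesis by (simp add: P.emeasure_space_1)
qed

lemma Z_lower: "ennreal (U z) \<le> (\<integral>\<^sup>+\<omega>. Zf U (Kset Xs Aix) ci n \<omega> \<partial>P)"
proof (induction n)
  case 0 then show ?case by (simp add: Z0)
next
  case (Suc n) then show ?case using Z_mono[of n] by (rule order_trans)
qed

lemma main_z:
  "\<exists>g\<in>borel_measurable P. (AE \<omega> in P. g \<omega> = U (xbar \<omega>) + Ci ci \<omega> \<and> 0 \<le> g \<omega>)
      \<and> ennreal (U z) \<le> (\<integral>\<^sup>+\<omega>. ennreal (g \<omega>) \<partial>P)"
proof -
  interpret P: prob_space P by (rule P_prob[OF pol str Ki_meas])
  define Z where "Z = Zf U (Kset Xs Aix) ci"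
  define good where "good \<omega> \<longleftrightarrow> \<omega> \<in> space P \<and> \<omega> \<in> Yset Xs Ai \<and> (\<forall>j x a. \<omega> j = (Some x, Some a) \<longrightarrow> (x, a) \<in> Kset Xs Aix)" for \<omega>
  have Ysets: "Yset Xs Ai \<in> sets P"
  proof (rule ccontr)
    assume "Yset Xs Ai \<notin> sets P"
    then have "emeasure P (Yset Xs Ai) = 0" by (rule emeasure_notin_sets)
    with Y1 show False by simp
  qed
  have AEY: "AE \<omega> in P. \<omega> \<in> Yset Xs Ai"
    using Ysets Y1 by (simp add: P.AE_in_set_eq_1 P.emeasure_eq_measure)
  have AEgood: "AE \<omega> in P. good \<omega>"
  proof -
    have "AE \<omega> in P. \<forall>j. \<forall>x a. \<omega> j = (Some x, Some a) \<longrightarrow> (x, a) \<in> Kset Xs Aix"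
      using action_ok[OF pol str Ki_meas] by (simp add: AE_all_countable)
    then show ?thesis using AEY AE_space unfolding good_def by eventually_elim auto
  qed
  have C0: "0 \<le> C0" using bspec[OF U0 z] by linarith
  define G where "G \<omega> = liminf (\<lambda>n. Z n \<omega>)" for \<omega>
  have Gm: "G \<in> borel_measurable P"
    unfolding G_def Z_def using ZP_meas by (intro borel_measurable_liminf) auto
  have Ygood: "\<exists>k. (\<forall>n\<ge>k. Z n \<omega> = ennreal (U (xbar \<omega>) + Ci ci \<omega>))
      \<and> (\<forall>n<k. Z n \<omega> \<le> ennreal (U (xbar \<omega>) + Ci ci \<omega>) + ennreal C0 \<and> snd (\<omega> n) \<noteq> None)
      \<and> (\<forall>m\<ge>k. snd (\<omega> m) = None) \<and> 0 \<le> U (xbar \<omega>) + Ci ci \<omega>" if "good \<omega>" for \<omega>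
    unfolding Z_def by (rule Y_analysis[of \<omega> Xs Ai]) (use that ci0 U0 in \<open>simp_all add: good_def\<close>)
  have Geq: "G \<omega> = ennreal (U (xbar \<omega>) + Ci ci \<omega>)" if "good \<omega>" for \<omega>
  proof -
    from Ygood[OF that] obtain k where k: "\<forall>n\<ge>k. Z n \<omega> = ennreal (U (xbar \<omega>) + Ci ci \<omega>)" by blast
    have "(\<lambda>n. Z n \<omega>) \<longlonglongrightarrow> ennreal (U (xbar \<omega>) + Ci ci \<omega>)"
      by (rule tendsto_eventually) (use k in \<open>auto simp: eventually_sequentially\<close>)
    then show ?thesis unfolding G_def by (rule lim_imp_Liminf[OF trivial_limit_sequentially])
  qed
  define A where "A n = (\<Union>m\<in>{n..}. {\<omega> \<in> space P. snd (\<omega> m) \<noteq> None})" for n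
  have Asets: "A n \<in> sets P" for n
  proof -
    have "(\<lambda>m. {\<omega> \<in> space P. snd (\<omega> m) \<noteq> None}) ` {n..} \<subseteq> sets P"
      using act_set by blast
    then show ?thesis unfolding A_def by (rule sets.countable_UN)
  qed
  have bound: "(\<integral>\<^sup>+\<omega>. Z n \<omega> \<partial>P) \<le> (\<integral>\<^sup>+\<omega>. G \<omega> \<partial>P) + ennreal (C0 * measure P (A n))" for n
  proof -
    have "(\<integral>\<^sup>+\<omega>. Z n \<omega> \<partial>P) \<le> (\<integral>\<^sup>+\<omega>. G \<omega> + ennreal C0 * indicator (A n) \<omega> \<partial>P)"
    proof (rule nn_integral_mono_AE)
      show "AE \<omega> in P. Z n \<omega> \<le> G \<omega> + ennreal C0 * indicator (A n) \<omega>"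
        using AEgood
      proof (rule eventually_mono)
        fix \<omega> assume g: "good \<omega>"
        from Ygood[OF g] obtain k where
          k1: "\<forall>n\<ge>k. Z n \<omega> = ennreal (U (xbar \<omega>) + Ci ci \<omega>)"
          and k2: "\<forall>n<k. Z n \<omega> \<le> ennreal (U (xbar \<omega>) + Ci ci \<omega>) + ennreal C0 \<and> snd (\<omega> n) \<noteq> None"
          by blast
        show "Z n \<omega> \<le> G \<omega> + ennreal C0 * indicator (A n) \<omega>"
        proof (cases "n < k")
          case True
          have "\<omega> \<in> space P" using g unfolding good_def by simp
          moreover have "snd (\<omega> n) \<noteq> None" using k2 True by simp
          ultimately have "\<omega> \<in> A n" unfolding A_def by blast
          then show ?thesis using True k2 Geq[OF g] by simp
        next
          case False
          then show ?thesis using k1 Geq[OF g] by (simp add: add_increasing2)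
        qed
      qed
    qed
    also have "\<dots> = (\<integral>\<^sup>+\<omega>. G \<omega> \<partial>P) + ennreal C0 * emeasure P (A n)"
      using Gm Asets by (simp add: nn_integral_add nn_integral_cmult_indicator)
    also have "\<dots> = (\<integral>\<^sup>+\<omega>. G \<omega> \<partial>P) + ennreal (C0 * measure P (A n))"
      using C0 by (simp add: P.emeasure_eq_measure ennreal_mult)
    finally show ?thesis .
  qed
  have lim: "(\<lambda>n. measure P (A n)) \<longlonglongrightarrow> measure P (\<Inter>n. A n)"
  proof (rule P.finite_Lim_measure_decseq)
    show "range A \<subseteq> P.events" using Asets by auto
    show "antimono_on UNIV A"
      unfolding A_def by (intro monotone_onI UN_mono) auto
  qed
  have "emeasure P {\<omega> \<in> space P. \<omega> \<in> (\<Inter>n. A n)} = 0"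
  proof (rule emeasure_eq_0_AE)
    show "AE \<omega> in P. \<not> \<omega> \<in> (\<Inter>n. A n)"
      using AEgood
    proof (rule eventually_mono)
      fix \<omega> assume g: "good \<omega>"
      from Ygood[OF g] obtain k where "\<forall>m\<ge>k. snd (\<omega> m) = None" by blast
      then have "\<omega> \<notin> A k" by (auto simp: A_def)
      then show "\<omega> \<notin> (\<Inter>n. A n)" by blast
    qed
  qed
  moreover have "{\<omega> \<in> space P. \<omega> \<in> (\<Inter>n. A n)} = (\<Inter>n. A n)"
  proof -
    have "(\<Inter>n. A n) \<subseteq> A 0" by (rule INT_lower) simp
    moreover have "A 0 \<subseteq> space P" by (auto simp: A_def)
    ultimately show ?thesis by auto
  qed
  ultimately have "measure P (\<Inter>n. A n) = 0" by (simp add: measure_def)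
  with lim have lim0: "(\<lambda>n. measure P (A n)) \<longlonglongrightarrow> 0" by simp
  have "(\<lambda>n. (\<integral>\<^sup>+\<omega>. G \<omega> \<partial>P) + ennreal (C0 * measure P (A n))) \<longlonglongrightarrow> (\<integral>\<^sup>+\<omega>. G \<omega> \<partial>P) + ennreal (C0 * 0)"
    by (intro tendsto_add tendsto_const tendsto_ennrealI tendsto_mult lim0)
  then have "(\<lambda>n. (\<integral>\<^sup>+\<omega>. G \<omega> \<partial>P) + ennreal (C0 * measure P (A n))) \<longlonglongrightarrow> (\<integral>\<^sup>+\<omega>. G \<omega> \<partial>P)"
    by simp
  then have Glow: "ennreal (U z) \<le> (\<integral>\<^sup>+\<omega>. G \<omega> \<partial>P)"
  proof (rule LIMSEQ_le_const[where a="ennreal (U z)"])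
    show "\<exists>N. \<forall>n\<ge>N. ennreal (U z) \<le> (\<integral>\<^sup>+\<omega>. G \<omega> \<partial>P) + ennreal (C0 * measure P (A n))"
    proof (intro exI allI impI)
      fix n :: nat
      show "ennreal (U z) \<le> (\<integral>\<^sup>+\<omega>. G \<omega> \<partial>P) + ennreal (C0 * measure P (A n))"
        using order_trans[OF Z_lower[of n] bound[of n, unfolded Z_def]] .
    qed
  qed
  define g where "g \<omega> = enn2real (G \<omega>)" for \<omega>
  show ?thesis
  proof (intro bexI conjI)
    show "g \<in> borel_measurable P" unfolding g_def by (rule borel_measurable_enn2real[OF Gm])
    show "AE \<omega> in P. g \<omega> = U (xbar \<omega>) + Ci ci \<omega> \<and> 0 \<le> g \<omega>"
      using AEgood
    proof (rule eventually_mono)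
      fix \<omega> assume gd: "good \<omega>"
      from Ygood[OF gd] have "0 \<le> U (xbar \<omega>) + Ci ci \<omega>" by blast
      then show "g \<omega> = U (xbar \<omega>) + Ci ci \<omega> \<and> 0 \<le> g \<omega>" using Geq[OF gd] by (simp add: g_def)
    qed
    have "(\<integral>\<^sup>+\<omega>. ennreal (g \<omega>) \<partial>P) = (\<integral>\<^sup>+\<omega>. G \<omega> \<partial>P)"
    proof (rule nn_integral_cong_AE)
      show "AE \<omega> in P. ennreal (g \<omega>) = G \<omega>"
        using AEgood
      proof (rule eventually_mono)
        fix \<omega> assume gd: "good \<omega>"
        from Ygood[OF gd] have "0 \<le> U (xbar \<omega>) + Ci ci \<omega>" by blast
        then show "ennreal (g \<omega>) = G \<omega>" using Geq[OF gd] by (simp add: g_def)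
      qed
    qed
    then show "ennreal (U z) \<le> (\<integral>\<^sup>+\<omega>. ennreal (g \<omega>) \<partial>P)" using Glow by simp
  qed
qed

end


lemma ext_lower:
  fixes F g :: "'b \<Rightarrow> real"
  assumes P: "prob_space P" and gm: "g \<in> borel_measurable P"
    and AEg: "AE \<omega> in P. g \<omega> = F \<omega> + B \<and> 0 \<le> g \<omega>"
    and B: "0 \<le> B" and vB: "0 \<le> v + B"
    and low: "ennreal (v + B) \<le> (\<integral>\<^sup>+\<omega>. ennreal (g \<omega>) \<partial>P)"
  shows "ereal v \<le> ext_integral P (\<lambda>\<omega>. ereal (F \<omega>))"
proof -
  interpret P: prob_space P by (rule P)
  define p where "p = (\<integral>\<^sup>+\<omega>. ennreal (g \<omega> - B) \<partial>P)"
  define m where "m = (\<integral>\<^sup>+\<omega>. ennreal (B - g \<omega>) \<partial>P)"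
  have e1: "(\<integral>\<^sup>+\<omega>. e2ennreal (ereal (F \<omega>)) \<partial>P) = p"
    unfolding p_def by (rule nn_integral_cong_AE) (use AEg in \<open>auto simp: e2ennreal_ereal elim!: eventually_mono\<close>)
  have e2: "(\<integral>\<^sup>+\<omega>. e2ennreal (- ereal (F \<omega>)) \<partial>P) = m"
    unfolding m_def by (rule nn_integral_cong_AE) (use AEg in \<open>auto simp: e2ennreal_ereal elim!: eventually_mono\<close>)
  have ext: "ext_integral P (\<lambda>\<omega>. ereal (F \<omega>)) = enn2ereal p - enn2ereal m"
    unfolding ext_integral_def e1 e2 ..
  have ptw: "ennreal (g \<omega>) + ennreal (B - g \<omega>) = ennreal (g \<omega> - B) + ennreal B" if "0 \<le> g \<omega>" for \<omega>
  proof (cases "g \<omega> \<le> B")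
    case True
    then have "ennreal (g \<omega>) + ennreal (B - g \<omega>) = ennreal (g \<omega> + (B - g \<omega>))"
      using that ennreal_plus[of "g \<omega>" "B - g \<omega>"] by simp
    then show ?thesis using True by (simp add: ennreal_neg)
  next
    case False
    then have "ennreal (g \<omega> - B) + ennreal B = ennreal (g \<omega> - B + B)"
      using B ennreal_plus[of "g \<omega> - B" B] by simp
    then show ?thesis using False by (simp add: ennreal_neg)
  qed
  have "(\<integral>\<^sup>+\<omega>. ennreal (g \<omega>) \<partial>P) + m = (\<integral>\<^sup>+\<omega>. ennreal (g \<omega>) + ennreal (B - g \<omega>) \<partial>P)"
    unfolding m_def using gm by (subst nn_integral_add) auto
  also have "\<dots> = (\<integral>\<^sup>+\<omega>. ennreal (g \<omega> - B) + ennreal B \<partial>P)"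
    by (rule nn_integral_cong_AE, rule eventually_mono[OF AEg]) (use ptw in blast)
  also have "\<dots> = p + ennreal B"
    unfolding p_def using gm by (subst nn_integral_add) (auto simp: P.emeasure_space_1)
  finally have eq: "(\<integral>\<^sup>+\<omega>. ennreal (g \<omega>) \<partial>P) + m = p + ennreal B" .
  have mB: "m \<le> ennreal B"
  proof -
    have "m \<le> (\<integral>\<^sup>+\<omega>. ennreal B \<partial>P)"
      unfolding m_def
    proof (rule nn_integral_mono_AE)
      show "AE \<omega> in P. ennreal (B - g \<omega>) \<le> ennreal B"
        using AEg by (rule eventually_mono) (intro ennreal_leI, linarith)
    qed
    then show ?thesis by (simp add: P.emeasure_space_1)
  qed
  have mfin: "m \<noteq> \<top>" using neq_top_trans[OF ennreal_neq_top mB] .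
  then obtain m0 where m0: "m = ennreal m0" "0 \<le> m0" by (cases m rule: ennreal_cases) auto
  have m0B: "m0 \<le> B" using mB m0 B by simp
  have m0: "m = ennreal m0" "0 \<le> m0" "m0 \<le> B" using m0 m0B by auto
  have key: "ennreal (v + B) + m \<le> p + ennreal B" using low eq by (metis add_right_mono)
  show ?thesis
  proof (cases "p = \<infinity>")
    case True
    then show ?thesis using m0 by (simp add: ext)
  next
    case False
    then obtain p' where p': "p = ennreal p'" "0 \<le> p'" by (cases p rule: ennreal_cases) auto
    have "ennreal (v + B + m0) \<le> ennreal (p' + B)"
      using key m0 p' vB B by (simp add: ennreal_plus[symmetric] del: ennreal_plus)
    then have "v + B + m0 \<le> p' + B" using p' B by (subst (asm) ennreal_le_iff) auto
    then show ?thesis using p' m0 by (simp add: ext)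
  qed
qed

lemma ext_outer:
  fixes V :: "'x \<Rightarrow> real" and E :: "'x \<Rightarrow> ereal"
  assumes M: "finite_measure M" and Vm: "V \<in> borel_measurable M"
    and Vb: "\<And>z. z \<in> space M \<Longrightarrow> \<bar>V z\<bar> \<le> B"
    and EV: "\<And>z. z \<in> space M \<Longrightarrow> ereal (V z) \<le> E z"
  shows "ereal (\<integral>z. V z \<partial>M) \<le> ext_integral M E"
proof -
  interpret M: finite_measure M by (rule M)
  have iV: "integrable M V"
    by (rule M.integrable_const_bound[where B=B]) (use Vb Vm in \<open>auto intro!: AE_I2\<close>)
  have f1: "(\<integral>\<^sup>+z. ennreal (V z) \<partial>M) \<noteq> \<top>" and f2: "(\<integral>\<^sup>+z. ennreal (- V z) \<partial>M) \<noteq> \<top>"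
    using iV by (auto simp: real_integrable_def)
  have "ereal (\<integral>z. V z \<partial>M) = enn2ereal (\<integral>\<^sup>+z. ennreal (V z) \<partial>M) - enn2ereal (\<integral>\<^sup>+z. ennreal (- V z) \<partial>M)"
    using f1 f2 unfolding real_lebesgue_integral_def[OF iV]
    by (cases "(\<integral>\<^sup>+z. ennreal (V z) \<partial>M)" rule: ennreal_cases;
        cases "(\<integral>\<^sup>+z. ennreal (- V z) \<partial>M)" rule: ennreal_cases) auto
  also have "\<dots> \<le> enn2ereal (\<integral>\<^sup>+z. e2ennreal (E z) \<partial>M) - enn2ereal (\<integral>\<^sup>+z. e2ennreal (- E z) \<partial>M)"
  proof (rule ereal_minus_mono)
    have "(\<integral>\<^sup>+z. ennreal (V z) \<partial>M) \<le> (\<integral>\<^sup>+z. e2ennreal (E z) \<partial>M)"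
    proof (rule nn_integral_mono)
      fix z assume "z \<in> space M"
      then show "ennreal (V z) \<le> e2ennreal (E z)" using e2ennreal_mono[OF EV] by (simp add: e2ennreal_ereal)
    qed
    then show "enn2ereal (\<integral>\<^sup>+z. ennreal (V z) \<partial>M) \<le> enn2ereal (\<integral>\<^sup>+z. e2ennreal (E z) \<partial>M)"
      by (simp add: less_eq_ennreal.rep_eq)
    have "(\<integral>\<^sup>+z. e2ennreal (- E z) \<partial>M) \<le> (\<integral>\<^sup>+z. ennreal (- V z) \<partial>M)"
    proof (rule nn_integral_mono)
      fix z assume z: "z \<in> space M"
      have "- E z \<le> ereal (- V z)" using EV[OF z] by (metis ereal_minus_le_minus uminus_ereal.simps(1))
      then show "e2ennreal (- E z) \<le> ennreal (- V z)" using e2ennreal_mono by (metis e2ennreal_ereal)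
    qed
    then show "enn2ereal (\<integral>\<^sup>+z. e2ennreal (- E z) \<partial>M) \<le> enn2ereal (\<integral>\<^sup>+z. ennreal (- V z) \<partial>M)"
      by (simp add: less_eq_ennreal.rep_eq)
  qed
  finally show ?thesis unfolding ext_integral_def .
qed


lemma min0_ereal: "min (a::ereal) b = 0 \<Longrightarrow> 0 \<le> a \<and> 0 \<le> b"
  by (metis min.bounded_iff order_refl)

theorem lemma4p6:
  fixes Xs :: "'x::polish_space set" and Ag Ai :: "'a::polish_space set"
    and Agx Aix :: "'x \<Rightarrow> 'a set"
    and qbar Q :: "'x \<Rightarrow> 'a \<Rightarrow> 'x measure"
    and Cg ci :: "'x \<Rightarrow> 'a \<Rightarrow> real"
    and \<eta> :: real
    and V :: "'x \<Rightarrow> real"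
    and \<beta> :: "'x \<Rightarrow> ('x, 'a) traj measure"
  assumes Xs: "Xs \<in> sets borel"
    and Ag: "Ag \<in> sets borel" and Ai: "Ai \<in> sets borel" and disj: "Ag \<inter> Ai = {}"
    and Agx: "\<forall>x\<in>Xs. Agx x \<subseteq> Ag" and Aix: "\<forall>x\<in>Xs. Aix x \<subseteq> Ai"
    and Kg_meas: "Kset Xs Agx \<in> sets borel" and Ki_meas: "Kset Xs Aix \<in> sets borel"
    and qbar: "kernel_on Xs (Kset Xs Agx) qbar"
    and qbar_diag: "\<forall>(x, a)\<in>Kset Xs Agx. emeasure (qbar x a) {x} = 0"
    and Q: "kernel_on Xs (Kset Xs Aix) Q"
    and Q_prob: "\<forall>(x, a)\<in>Kset Xs Aix. prob_space (Q x a)"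
    and Cg_meas: "(\<lambda>p. Cg (fst p) (snd p)) \<in> borel_measurable (restrict_space borel (Kset Xs Agx))"
    and ci_meas: "(\<lambda>p. ci (fst p) (snd p)) \<in> borel_measurable (restrict_space borel (Kset Xs Aix))"
    and eta: "\<eta> > 0"
    and A: "AssumptionA Xs Agx Aix qbar Cg ci"
    and C: "AssumptionC1 Xs Ag Ai Agx Aix qbar Q Cg ci \<or> AssumptionC2 Xs Ag Ai Agx Aix qbar Q Cg ci"
    and beta: "rand_intervention Xs Ai Aix Q \<beta>"
    and V_meas: "V \<in> borel_measurable (XM Xs)"
    and V_bdd: "bounded (V ` Xs)"
    and bellman: "\<forall>x\<in>Xs.
        min (INF a\<in>Agx x. ereal (- \<eta> * V x + (\<integral>z. V z \<partial>qbar x a)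
                                  - V x * measure (qbar x a) Xs + Cg x a))
            (INF a\<in>Aix x. ereal (- V x + (\<integral>z. V z \<partial>Q x a) + ci x a)) = 0"
  shows "\<forall>(x, a)\<in>Kset Xs Agx.
           ereal (- \<eta> * V x)
           + ext_integral (qbar x a)
               (\<lambda>z. ext_integral (\<beta> z) (\<lambda>y. ereal (V (xbar y) + Ci ci y)))
           - ereal (V x * measure (qbar x a) Xs) + ereal (Cg x a) \<ge> 0"
proof -
  from A have ci0: "\<forall>(x, a)\<in>Kset Xs Aix. 0 \<le> ci x a" unfolding AssumptionA_def by blast
  from V_bdd obtain B0 where B0: "\<forall>y\<in>V ` Xs. norm y \<le> B0" unfolding bounded_iff by blast
  define B where "B = max B0 0"
  have B: "0 \<le> B" "\<And>x. x \<in> Xs \<Longrightarrow> \<bar>V x\<bar> \<le> B" using B0 by (auto simp: B_def)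
  from beta obtain b where pol: "is_policy Xs Ai Aix b"
    and bz: "\<forall>z\<in>Xs. is_strategic Xs Ai (Kset Xs Aix) Q b z (\<beta> z) \<and> emeasure (\<beta> z) (Yset Xs Ai) = 1"
    unfolding rand_intervention_def by blast
  define U where "U x = V x + B" for x
  have Um: "U \<in> borel_measurable (XM Xs)" unfolding U_def using V_meas by simp
  have U0: "\<forall>x\<in>Xs. 0 \<le> U x \<and> U x \<le> 2 * B"
  proof
    fix x assume "x \<in> Xs"
    from B(2)[OF this] show "0 \<le> U x \<and> U x \<le> 2 * B" unfolding U_def by (simp add: abs_le_iff)
  qed
  have INF2: "0 \<le> (INF a\<in>Aix x. ereal (- V x + (\<integral>z. V z \<partial>Q x a) + ci x a))"
    and INF1: "0 \<le> (INF a\<in>Agx x. ereal (- \<eta> * V x + (\<integral>z. V z \<partial>qbar x a) - V x * measure (qbar x a) Xs + Cg x a))"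
    if "x \<in> Xs" for x
    using min0_ereal[OF bspec[OF bellman that]] by auto
  have bellQ: "\<forall>(x, a)\<in>Kset Xs Aix. U x \<le> (\<integral>u. U u \<partial>Q x a) + ci x a"
  proof (intro ballI, clarify)
    fix x a assume K: "(x, a) \<in> Kset Xs Aix"
    then have x: "x \<in> Xs" and a: "a \<in> Aix x" by (auto simp: Kset_def)
    have "0 \<le> ereal (- V x + (\<integral>z. V z \<partial>Q x a) + ci x a)"
      using INF2[OF x] INF_lower[OF a, of "\<lambda>a. ereal (- V x + (\<integral>z. V z \<partial>Q x a) + ci x a)"] by (rule order_trans)
    then have bl: "0 \<le> - V x + (\<integral>z. V z \<partial>Q x a) + ci x a" by simp
    interpret Qx: prob_space "Q x a" using Q_prob K by auto
    have Qs: "sets (Q x a) = sets (XM Xs)" using Q K unfolding kernel_on_def by auto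
    have Qsp: "space (Q x a) = Xs"
      using sets_eq_imp_space_eq[OF Qs] by (simp add: XM_def space_restrict_space)
    have VQ: "V \<in> borel_measurable (Q x a)" using V_meas measurable_cong_sets[OF Qs refl] by blast
    have iV: "integrable (Q x a) V"
      by (rule Qx.integrable_const_bound[where B=B]) (use B Qsp VQ in \<open>auto intro!: AE_I2\<close>)
    have "(\<integral>u. U u \<partial>Q x a) = (\<integral>u. V u \<partial>Q x a) + B"
      unfolding U_def using iV by (simp add: Qx.prob_space)
    then show "U x \<le> (\<integral>u. U u \<partial>Q x a) + ci x a" using bl by (simp add: U_def)
  qed
  have inner: "ereal (V z) \<le> ext_integral (\<beta> z) (\<lambda>y. ereal (V (xbar y) + Ci ci y))" if z: "z \<in> Xs" for z
  proof -
    have str: "is_strategic Xs Ai (Kset Xs Aix) Q b z (\<beta> z)" and Y1: "emeasure (\<beta> z) (Yset Xs Ai) = 1"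
      using bz z by auto
    obtain g where gm: "g \<in> borel_measurable (\<beta> z)"
      and AEg: "AE \<omega> in \<beta> z. g \<omega> = U (xbar \<omega>) + Ci ci \<omega> \<and> 0 \<le> g \<omega>"
      and low: "ennreal (U z) \<le> (\<integral>\<^sup>+\<omega>. ennreal (g \<omega>) \<partial>\<beta> z)"
      using main_z[OF pol str Ki_meas Q Q_prob Y1 z Um U0 ci_meas ci0 bellQ] by blast
    show ?thesis
    proof (rule ext_lower[OF P_prob[OF pol str Ki_meas] gm _ B(1)])
      show "AE \<omega> in \<beta> z. g \<omega> = V (xbar \<omega>) + Ci ci \<omega> + B \<and> 0 \<le> g \<omega>"
        using AEg by (rule eventually_mono) (simp add: U_def)
      show "0 \<le> V z + B" using B(2)[OF z] by (simp add: abs_le_iff)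
      show "ennreal (V z + B) \<le> (\<integral>\<^sup>+\<omega>. ennreal (g \<omega>) \<partial>\<beta> z)" using low by (simp add: U_def)
    qed
  qed
  show ?thesis
  proof (intro ballI, clarify)
    fix x a assume K: "(x, a) \<in> Kset Xs Agx"
    then have x: "x \<in> Xs" and a: "a \<in> Agx x" by (auto simp: Kset_def)
    have qs: "sets (qbar x a) = sets (XM Xs)" and qf: "finite_measure (qbar x a)"
      using qbar K unfolding kernel_on_def by auto
    have qsp: "space (qbar x a) = Xs"
      using sets_eq_imp_space_eq[OF qs] by (simp add: XM_def space_restrict_space)
    have Vq: "V \<in> borel_measurable (qbar x a)" using V_meas measurable_cong_sets[OF qs refl] by blast
    define Eo where "Eo = ext_integral (qbar x a) (\<lambda>z. ext_integral (\<beta> z) (\<lambda>y. ereal (V (xbar y) + Ci ci y)))"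
    have Eo: "ereal (\<integral>z. V z \<partial>qbar x a) \<le> Eo"
      unfolding Eo_def
    proof (rule ext_outer[where B=B, OF qf Vq])
      show "\<And>z. z \<in> space (qbar x a) \<Longrightarrow> \<bar>V z\<bar> \<le> B" using B(2) unfolding qsp .
      show "\<And>z. z \<in> space (qbar x a) \<Longrightarrow> ereal (V z) \<le> ext_integral (\<beta> z) (\<lambda>y. ereal (V (xbar y) + Ci ci y))"
        using inner unfolding qsp .
    qed
    have "0 \<le> ereal (- \<eta> * V x + (\<integral>z. V z \<partial>qbar x a) - V x * measure (qbar x a) Xs + Cg x a)"
      using INF1[OF x] INF_lower[OF a, of "\<lambda>a. ereal (- \<eta> * V x + (\<integral>z. V z \<partial>qbar x a) - V x * measure (qbar x a) Xs + Cg x a)"]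
      by (rule order_trans)
    then have bl: "0 \<le> - \<eta> * V x + (\<integral>z. V z \<partial>qbar x a) - V x * measure (qbar x a) Xs + Cg x a" by simp
    show "0 \<le> ereal (- \<eta> * V x) + Eo - ereal (V x * measure (qbar x a) Xs) + ereal (Cg x a)"
    proof (cases Eo)
      case (real e)
      then show ?thesis using Eo bl by simp
    next
      case PInf then show ?thesis by simp
    next
      case MInf then show ?thesis using Eo by simp
    qed
  qed
qed


end
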